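(* There is an absolute constant $C$ such that the following holds. Let $\mathcal V_1,\mathcal V_2\subseteq\mathbb R^n$ be subspaces of dimensions $k_1,k_2$ with $\mathcal V_1\cap\mathcal V_2=\mathcal W$, $\dim\mathcal W=m$. Let $M=\mathrm{proj}(\mathcal V_1)+\mathrm{proj}(\mathcal V_2)$ and suppose $\lambda_{k_1+k_2-m}(M)>\delta$. Let $\tilde{\mathcal V}_1,\tilde{\mathcal V}_2$ be subspaces of dimensions $k_1,k_2$ with $\|\mathrm{proj}(\mathcal V_i)-\mathrm{proj}(\tilde{\mathcal V}_i)\|_F\le\gamma$ for $i=1,2$. Let $\tilde{\mathcal W}$ be the span of the top $m$ eigenvectors of $\tilde M=\mathrm{proj}(\tilde{\mathcal V}_1)+\mathrm{proj}(\tilde{\mathcal V}_2)$. Then $\|\mathrm{proj}(\mathcal W)-\mathrm{proj}(\tilde{\mathcal W})\|_F\le C\gamma/\delta$.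
   Context: $\mathrm{proj}(\mathcal U)$ is the orthogonal projection matrix onto subspace $\mathcal U$; $\lambda_k$ denotes the $k$-th largest eigenvalue; $\|\cdot\|_F$ is the Frobenius norm. *)

theory Defs
  imports "Jordan_Normal_Form.VS_Connect" "Jordan_Normal_Form.Char_Poly"
begin

text \<open>Euclidean space R^n is rendered as carrier_vec n of real vectors (Jordan_Normal_Form),
  so that the dimension n is an ordinary value and the constant C can be chosen
  independently of n.\<close>

definition rsubspace :: "nat \<Rightarrow> real vec set \<Rightarrow> bool" where
  "rsubspace n W = VectorSpace.subspace (class_ring :: real ring) W (module_vec TYPE(real) n)"

definition rdim :: "nat \<Rightarrow> real vec set \<Rightarrow> nat" where
  "rdim n W = vectorspace.dim (class_ring :: real ring) ((module_vec TYPE(real) n)\<lparr>carrier := W\<rparr>)"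

definition rspan :: "nat \<Rightarrow> real vec set \<Rightarrow> real vec set" where
  "rspan n S = LinearCombinations.module.span (class_ring :: real ring) (module_vec TYPE(real) n) S"

definition orth_proj :: "nat \<Rightarrow> real vec set \<Rightarrow> real vec \<Rightarrow> real vec" where
  "orth_proj n W x = (THE y. y \<in> W \<and> (\<forall>w\<in>W. (x - y) \<bullet> w = 0))"

definition proj :: "nat \<Rightarrow> real vec set \<Rightarrow> real mat" where
  "proj n W = mat n n (\<lambda>(i,j). orth_proj n W (unit_vec n j) $ i)"

definition frob_norm :: "real mat \<Rightarrow> real" where
  "frob_norm A = sqrt (\<Sum>i<dim_row A. \<Sum>j<dim_col A. (A $$ (i,j))^2)"

text \<open>Eigenvalues (with multiplicity) in non-increasing order, for a matrix whose
  characteristic polynomial splits over the reals (e.g. a symmetric real matrix).\<close>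
definition eigs_desc :: "real mat \<Rightarrow> real list" where
  "eigs_desc A = (SOME xs. sorted_wrt (\<ge>) xs \<and> char_poly A = (\<Prod>x\<leftarrow>xs. [:- x, 1:]))"

text \<open>lambda_k = k-th largest eigenvalue (1-based).\<close>
definition eig :: "nat \<Rightarrow> real mat \<Rightarrow> real" where
  "eig k A = eigs_desc A ! (k - 1)"

end

theory Submission
  imports Defs
begin


definition ortho :: "nat \<Rightarrow> nat \<Rightarrow> (nat \<Rightarrow> real vec) \<Rightarrow> bool" where
  "ortho n k b \<longleftrightarrow> (\<forall>i<k. b i \<in> carrier_vec n) \<and> (\<forall>i<k. \<forall>j<k. b i \<bullet> b j = (if i = j then 1 else 0))"

definition lc :: "nat \<Rightarrow> nat \<Rightarrow> (nat \<Rightarrow> real vec) \<Rightarrow> (nat \<Rightarrow> real) \<Rightarrow> real vec" where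
  "lc n k b c = vec n (\<lambda>i. \<Sum>j<k. c j * b j $ i)"

definition pr :: "nat \<Rightarrow> nat \<Rightarrow> (nat \<Rightarrow> real vec) \<Rightarrow> real vec \<Rightarrow> real vec" where
  "pr n k b x = lc n k b (\<lambda>j. x \<bullet> b j)"

definition spn :: "nat \<Rightarrow> nat \<Rightarrow> (nat \<Rightarrow> real vec) \<Rightarrow> real vec set" where
  "spn n k b = range (lc n k b)"

lemma dot_sum: "x \<in> carrier_vec n \<Longrightarrow> y \<in> carrier_vec n \<Longrightarrow> x \<bullet> y = (\<Sum>i<n. x $ i * y $ i)"
  unfolding scalar_prod_def by (auto simp: lessThan_atLeast0)

lemma lc_carrier[simp]: "lc n k b c \<in> carrier_vec n"
  unfolding lc_def by simp

lemma lc_dim[simp]: "dim_vec (lc n k b c) = n"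
  unfolding lc_def by simp

lemma lc_index[simp]: "i < n \<Longrightarrow> lc n k b c $ i = (\<Sum>j<k. c j * b j $ i)"
  unfolding lc_def by simp

lemma orthoD: "ortho n k b \<Longrightarrow> i < k \<Longrightarrow> b i \<in> carrier_vec n"
  "ortho n k b \<Longrightarrow> i < k \<Longrightarrow> j < k \<Longrightarrow> b i \<bullet> b j = (if i = j then 1 else 0)"
  unfolding ortho_def by auto

lemma lc_dot:
  assumes b: "\<And>j. j < k \<Longrightarrow> b j \<in> carrier_vec n" and y: "y \<in> carrier_vec n"
  shows "lc n k b c \<bullet> y = (\<Sum>j<k. c j * (b j \<bullet> y))"
proof -
  have "lc n k b c \<bullet> y = (\<Sum>i<n. (\<Sum>j<k. c j * b j $ i) * y $ i)"
    by (subst dot_sum[OF lc_carrier y], intro sum.cong refl, simp)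
  also have "\<dots> = (\<Sum>j<k. c j * (\<Sum>i<n. b j $ i * y $ i))"
    by (simp add: sum_distrib_left sum_distrib_right sum.swap[of _ "{..<n}"] mult.assoc)
  also have "\<dots> = (\<Sum>j<k. c j * (b j \<bullet> y))"
    using b y by (intro sum.cong refl) (simp add: dot_sum[of "b _" n y])
  finally show ?thesis .
qed

lemma dot_lc:
  assumes b: "\<And>j. j < k \<Longrightarrow> b j \<in> carrier_vec n" and y: "y \<in> carrier_vec n"
  shows "y \<bullet> lc n k b c = (\<Sum>j<k. c j * (y \<bullet> b j))"
proof -
  have "y \<bullet> lc n k b c = lc n k b c \<bullet> y" using y by (simp add: comm_scalar_prod[of _ n])
  also have "\<dots> = (\<Sum>j<k. c j * (b j \<bullet> y))" by (rule lc_dot[OF b y])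
  also have "\<dots> = (\<Sum>j<k. c j * (y \<bullet> b j))"
    using b y by (intro sum.cong refl) (simp add: comm_scalar_prod[of _ n])
  finally show ?thesis .
qed

lemma ortho_dot_lc:
  assumes o: "ortho n k b" and i: "i < k"
  shows "b i \<bullet> lc n k b c = c i"
proof -
  have "b i \<bullet> lc n k b c = (\<Sum>j<k. c j * (b i \<bullet> b j))"
    using o i by (intro dot_lc) (auto simp: ortho_def)
  also have "\<dots> = (\<Sum>j<k. if j = i then c j else 0)"
    using o i by (intro sum.cong refl) (auto simp: ortho_def)
  also have "\<dots> = c i" using i by simp
  finally show ?thesis .
qed

lemma lc_dot_lc:
  assumes o: "ortho n k b"
  shows "lc n k b c \<bullet> lc n k b d = (\<Sum>j<k. c j * d j)"
proof -
  have "lc n k b c \<bullet> lc n k b d = (\<Sum>j<k. c j * (b j \<bullet> lc n k b d))"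
    using o by (intro lc_dot) (auto simp: ortho_def)
  also have "\<dots> = (\<Sum>j<k. c j * d j)"
    using o by (intro sum.cong refl) (simp add: ortho_dot_lc)
  finally show ?thesis .
qed

lemma lc_add: "lc n k b c + lc n k b d = lc n k b (\<lambda>j. c j + d j)"
  by (rule eq_vecI) (auto simp: sum.distrib algebra_simps)

lemma lc_minus: "lc n k b c - lc n k b d = lc n k b (\<lambda>j. c j - d j)"
  by (rule eq_vecI) (auto simp: sum_subtractf algebra_simps)

lemma lc_smult: "a \<cdot>\<^sub>v lc n k b c = lc n k b (\<lambda>j. a * c j)"
  by (rule eq_vecI) (auto simp: sum_distrib_left algebra_simps)

lemma lc_Suc: "lc n (Suc k) b c = lc n k b c + c k \<cdot>\<^sub>v b k" if "b k \<in> carrier_vec n"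
  using that by (intro eq_vecI) auto

lemma lc_zero: "lc n 0 b c = 0\<^sub>v n"
  by (rule eq_vecI) auto

lemma lc_ext:
  assumes "\<And>j. j < k \<Longrightarrow> b' j = b j" "k \<le> k'"
  shows "lc n k b c = lc n k' b' (\<lambda>j. if j < k then c j else 0)"
proof (rule eq_vecI)
  fix i assume "i < dim_vec (lc n k' b' (\<lambda>j. if j < k then c j else 0))"
  hence i: "i < n" by simp
  have "(\<Sum>j<k'. (if j < k then c j else 0) * b' j $ i) = (\<Sum>j<k. (if j < k then c j else 0) * b' j $ i)"
    using assms(2) by (intro sum.mono_neutral_right) auto
  thus "lc n k b c $ i = lc n k' b' (\<lambda>j. if j < k then c j else 0) $ i"
    using i assms(1) by simp
qed simp

lemma spn_mono:
  assumes "\<And>j. j < k \<Longrightarrow> b' j = b j" "k \<le> k'"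
  shows "spn n k b \<subseteq> spn n k' b'"
proof
  fix y assume "y \<in> spn n k b"
  then obtain c where "y = lc n k b c" unfolding spn_def by auto
  hence "y = lc n k' b' (\<lambda>j. if j < k then c j else 0)" using lc_ext[OF assms] by simp
  thus "y \<in> spn n k' b'" unfolding spn_def by simp
qed

lemma pr_in_spn: "pr n k b x \<in> spn n k b"
  unfolding pr_def spn_def by simp

lemma pr_carrier[simp]: "pr n k b x \<in> carrier_vec n"
  unfolding pr_def by simp

lemma pr_dim[simp]: "dim_vec (pr n k b x) = n"
  unfolding pr_def by simp

lemma resid_orth:
  assumes o: "ortho n k b" and x: "x \<in> carrier_vec n" and i: "i < k"
  shows "(x - pr n k b x) \<bullet> b i = 0"
proof -
  have bi: "b i \<in> carrier_vec n" using o i by (simp add: ortho_def)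
  have "(x - pr n k b x) \<bullet> b i = x \<bullet> b i - pr n k b x \<bullet> b i"
    using x bi by (simp add: minus_scalar_prod_distrib[of _ n])
  also have "pr n k b x \<bullet> b i = b i \<bullet> pr n k b x"
    using bi by (simp add: comm_scalar_prod[of _ n])
  also have "\<dots> = x \<bullet> b i" unfolding pr_def using o i by (simp add: ortho_dot_lc)
  finally show ?thesis by simp
qed

lemma resid_orth_lc:
  assumes o: "ortho n k b" and x: "x \<in> carrier_vec n"
  shows "(x - pr n k b x) \<bullet> lc n k b c = 0"
proof -
  have "(x - pr n k b x) \<bullet> lc n k b c = (\<Sum>j<k. c j * ((x - pr n k b x) \<bullet> b j))"
    using o x by (intro dot_lc) (auto simp: ortho_def)
  also have "\<dots> = 0" using resid_orth[OF o x] by simp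
  finally show ?thesis .
qed

lemma resid_orth_spn:
  assumes o: "ortho n k b" and x: "x \<in> carrier_vec n" and y: "y \<in> spn n k b"
  shows "(x - pr n k b x) \<bullet> y = 0"
  using y resid_orth_lc[OF o x] unfolding spn_def by auto

lemma pythag:
  assumes o: "ortho n k b" and x: "x \<in> carrier_vec n"
  shows "x \<bullet> x = (\<Sum>j<k. (x \<bullet> b j)^2) + (x - pr n k b x) \<bullet> (x - pr n k b x)"
proof -
  let ?p = "pr n k b x" let ?r = "x - ?p"
  have r: "?r \<in> carrier_vec n" using x by simp
  have xe: "x = ?r + ?p" using x by (intro eq_vecI) auto
  have "x \<bullet> x = (?r + ?p) \<bullet> (?r + ?p)" using xe by simp
  also have "\<dots> = ?r \<bullet> ?r + ?r \<bullet> ?p + (?p \<bullet> ?r + ?p \<bullet> ?p)"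
    using r by (simp add: add_scalar_prod_distrib[of _ n] scalar_prod_add_distrib[of _ n])
  also have "?r \<bullet> ?p = 0" using resid_orth_lc[OF o x, of "\<lambda>j. x \<bullet> b j"] unfolding pr_def by simp
  also have "?p \<bullet> ?r = 0" using r `?r \<bullet> ?p = 0` by (simp add: comm_scalar_prod[of _ n])
  also have "?p \<bullet> ?p = (\<Sum>j<k. (x \<bullet> b j)^2)" unfolding pr_def using o
    by (simp add: lc_dot_lc power2_eq_square)
  finally show ?thesis by simp
qed

lemma self_dot_nonneg: "(x :: real vec) \<bullet> x \<ge> 0"
  unfolding scalar_prod_def by (auto intro!: sum_nonneg)

lemma self_dot_zero: "(x :: real vec) \<in> carrier_vec n \<Longrightarrow> x \<bullet> x = 0 \<Longrightarrow> x = 0\<^sub>v n"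
proof -
  assume x: "x \<in> carrier_vec n" and z: "x \<bullet> x = 0"
  have "(\<Sum>i<n. x $ i * x $ i) = 0" using z x by (simp add: dot_sum)
  hence "\<forall>i\<in>{..<n}. x $ i * x $ i = 0" by (subst (asm) sum_nonneg_eq_0_iff) auto
  thus ?thesis using x by (intro eq_vecI) auto
qed

lemma bessel:
  assumes o: "ortho n k b" and x: "x \<in> carrier_vec n"
  shows "(\<Sum>j<k. (x \<bullet> b j)^2) \<le> x \<bullet> x"
  using pythag[OF o x] self_dot_nonneg[of "x - pr n k b x"] by linarith

lemma ortho_le: assumes o: "ortho n k b" shows "k \<le> n"
proof -
  have "real k = (\<Sum>j<k. b j \<bullet> b j)" using o by (simp add: ortho_def)
  also have "\<dots> = (\<Sum>j<k. \<Sum>i<n. (unit_vec n i \<bullet> b j)^2)"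
  proof (intro sum.cong refl)
    fix j assume "j \<in> {..<k}"
    hence bj: "b j \<in> carrier_vec n" using o by (simp add: ortho_def)
    have "b j \<bullet> b j = (\<Sum>i<n. b j $ i * b j $ i)" using bj by (simp add: dot_sum)
    also have "\<dots> = (\<Sum>i<n. (unit_vec n i \<bullet> b j)^2)"
      using bj by (intro sum.cong refl) (simp add: power2_eq_square)
    finally show "b j \<bullet> b j = (\<Sum>i<n. (unit_vec n i \<bullet> b j)^2)" .
  qed
  also have "\<dots> = (\<Sum>i<n. \<Sum>j<k. (unit_vec n i \<bullet> b j)^2)" by (rule sum.swap)
  also have "\<dots> \<le> (\<Sum>i<n. 1)"
    by (intro sum_mono order.trans[OF bessel[OF o]]) auto
  finally show ?thesis by simp
qed

lemma ortho_extend: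
  assumes o: "ortho n k b" and x: "x \<in> carrier_vec n" and nx: "x \<notin> spn n k b"
  defines "r \<equiv> x - pr n k b x"
  defines "b' \<equiv> b(k := (1 / sqrt (r \<bullet> r)) \<cdot>\<^sub>v r)"
  shows "ortho n (Suc k) b'" "x \<in> spn n (Suc k) b'" "\<And>j. j < k \<Longrightarrow> b' j = b j"
proof -
  have r: "r \<in> carrier_vec n" unfolding r_def using x by simp
  have xe: "x = r + pr n k b x" unfolding r_def using x by (intro eq_vecI) auto
  have rne: "r \<noteq> 0\<^sub>v n"
  proof
    assume "r = 0\<^sub>v n"
    hence "x = pr n k b x" using xe by simp
    thus False using nx pr_in_spn by metis
  qed
  have rr: "r \<bullet> r > 0" using self_dot_nonneg[of r] self_dot_zero[OF r] rne by fastforce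
  define s where "s = sqrt (r \<bullet> r)"
  have s: "s > 0" using rr unfolding s_def by simp
  have ss: "(1 / s) * ((1 / s) * (r \<bullet> r)) = 1"
  proof -
    have "s * s = r \<bullet> r" unfolding s_def using rr by (simp add: real_sqrt_mult_self)
    thus ?thesis using s rr by (simp add: field_simps)
  qed
  have orb: "\<And>i. i < k \<Longrightarrow> r \<bullet> b i = 0" unfolding r_def using resid_orth[OF o x] .
  have bc: "\<And>i. i < k \<Longrightarrow> b i \<in> carrier_vec n" using o by (simp add: ortho_def)
  have rb: "\<And>i. i < k \<Longrightarrow> b i \<bullet> r = 0" using orb bc r by (simp add: comm_scalar_prod[of _ n])
  have b'k: "b' k = (1 / s) \<cdot>\<^sub>v r" unfolding b'_def s_def by simp
  show eq: "\<And>j. j < k \<Longrightarrow> b' j = b j" unfolding b'_def by simp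
  have b'c: "\<And>i. i < Suc k \<Longrightarrow> b' i \<in> carrier_vec n"
    using bc r eq b'k by (metis less_Suc_eq smult_carrier_vec)
  show o': "ortho n (Suc k) b'"
    unfolding ortho_def
  proof (intro conjI allI impI)
    fix i assume "i < Suc k" thus "b' i \<in> carrier_vec n" by (rule b'c)
  next
    fix i j assume i: "i < Suc k" and j: "j < Suc k"
    show "b' i \<bullet> b' j = (if i = j then 1 else 0)"
    proof (cases "i < k")
      case True
      show ?thesis
      proof (cases "j < k")
        case True thus ?thesis using `i < k` o eq by (simp add: ortho_def)
      next
        case False hence "j = k" using j by simp
        thus ?thesis using True eq b'k rb r bc by simp
      qed
    next
      case False hence ik: "i = k" using i by simp
      show ?thesis
      proof (cases "j < k")
        case True thus ?thesis using ik eq b'k orb r bc by simp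
      next
        case False hence "j = k" using j by simp
        thus ?thesis using ik b'k r ss rr by simp
      qed
    qed
  qed
  have sr: "s \<cdot>\<^sub>v ((1 / s) \<cdot>\<^sub>v r) = r" using s by (simp add: smult_smult_assoc)
  have "x = pr n k b x + s \<cdot>\<^sub>v ((1 / s) \<cdot>\<^sub>v r)"
    unfolding sr using xe r by (simp add: comm_add_vec[of r n])
  also have "pr n k b x = lc n (Suc k) b' (\<lambda>j. if j < k then x \<bullet> b j else 0)"
    unfolding pr_def by (rule lc_ext[OF eq]) auto
  also have "s \<cdot>\<^sub>v ((1 / s) \<cdot>\<^sub>v r) = lc n (Suc k) b' (\<lambda>j. if j = k then s else 0)"
  proof (rule eq_vecI)
    fix i assume "i < dim_vec (lc n (Suc k) b' (\<lambda>j. if j = k then s else 0))"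
    hence i: "i < n" by simp
    have "(\<Sum>j<Suc k. (if j = k then s else 0) * b' j $ i) = s * b' k $ i" by simp
    thus "(s \<cdot>\<^sub>v ((1 / s) \<cdot>\<^sub>v r)) $ i = lc n (Suc k) b' (\<lambda>j. if j = k then s else 0) $ i"
      using i r b'k by simp
  qed (use r in simp)
  also have "lc n (Suc k) b' (\<lambda>j. if j < k then x \<bullet> b j else 0) + lc n (Suc k) b' (\<lambda>j. if j = k then s else 0) \<in> spn n (Suc k) b'"
    unfolding lc_add spn_def by simp
  finally show "x \<in> spn n (Suc k) b'" .
qed



definition closedV :: "nat \<Rightarrow> real vec set \<Rightarrow> bool" where
  "closedV n V \<longleftrightarrow> V \<subseteq> carrier_vec n \<and> 0\<^sub>v n \<in> V \<and> (\<forall>x\<in>V. \<forall>y\<in>V. x + y \<in> V) \<and> (\<forall>a. \<forall>x\<in>V. a \<cdot>\<^sub>v x \<in> V)"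

lemma closedV_minus:
  assumes c: "closedV n V" and x: "x \<in> V" and y: "y \<in> V" shows "x - y \<in> V"
proof -
  have xc: "x \<in> carrier_vec n" "y \<in> carrier_vec n" using c x y by (auto simp: closedV_def)
  have "x + (-1) \<cdot>\<^sub>v y \<in> V" using c x y by (auto simp: closedV_def)
  moreover have "x + (-1) \<cdot>\<^sub>v y = x - y" using xc by (intro eq_vecI) auto
  ultimately show ?thesis by simp
qed

lemma lc_cong: "(\<And>j. j < k \<Longrightarrow> c j = d j) \<Longrightarrow> (\<And>j. j < k \<Longrightarrow> b j = b' j) \<Longrightarrow> lc n k b c = lc n k b' d"
  unfolding lc_def by (intro eq_vecI) auto

lemma lc_closed:
  assumes c: "closedV n V" and b: "\<And>j. j < k \<Longrightarrow> b j \<in> V"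
  shows "lc n k b d \<in> V"
  using b
proof (induction k)
  case 0 thus ?case using c by (simp add: lc_zero closedV_def)
next
  case (Suc k)
  have bk: "b k \<in> V" using Suc.prems by simp
  hence "b k \<in> carrier_vec n" using c by (auto simp: closedV_def)
  hence "lc n (Suc k) b d = lc n k b d + d k \<cdot>\<^sub>v b k" by (rule lc_Suc)
  moreover have "lc n k b d \<in> V" using Suc by simp
  ultimately show ?case using c bk by (simp add: closedV_def)
qed

lemma spn_sub: "closedV n V \<Longrightarrow> (\<And>j. j < k \<Longrightarrow> b j \<in> V) \<Longrightarrow> spn n k b \<subseteq> V"
  unfolding spn_def using lc_closed by blast

lemma closedV_spn: "closedV n (spn n k b)"
  unfolding closedV_def spn_def
proof (intro conjI ballI allI)
  show "0\<^sub>v n \<in> range (lc n k b)" by (rule range_eqI[of _ _ "\<lambda>_. 0"]) (rule eq_vecI, auto)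
next
  fix x y assume "x \<in> range (lc n k b)" "y \<in> range (lc n k b)"
  thus "x + y \<in> range (lc n k b)" by (auto simp: lc_add)
next
  fix a x assume "x \<in> range (lc n k b)"
  thus "a \<cdot>\<^sub>v x \<in> range (lc n k b)" by (auto simp: lc_smult)
qed auto

lemma pr_id:
  assumes o: "ortho n k b" and x: "x \<in> spn n k b"
  shows "pr n k b x = x"
proof -
  obtain c where xc: "x = lc n k b c" using x unfolding spn_def by auto
  have "pr n k b x = lc n k b (\<lambda>j. x \<bullet> b j)" unfolding pr_def ..
  also have "\<dots> = lc n k b c"
  proof (rule lc_cong)
    fix j assume j: "j < k"
    hence bj: "b j \<in> carrier_vec n" using o by (simp add: ortho_def)
    have "x \<bullet> b j = b j \<bullet> x" using bj xc by (simp add: comm_scalar_prod[of _ n])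
    thus "x \<bullet> b j = c j" using xc o j by (simp add: ortho_dot_lc)
  qed simp
  finally show ?thesis using xc by simp
qed

lemma parseval:
  assumes o: "ortho n k b" and x: "x \<in> spn n k b"
  shows "x \<bullet> x = (\<Sum>j<k. (x \<bullet> b j)^2)"
proof -
  have xc: "x \<in> carrier_vec n" using x unfolding spn_def by auto
  have "x - pr n k b x = 0\<^sub>v n" using pr_id[OF o x] xc by simp
  thus ?thesis using pythag[OF o xc] by simp
qed

lemma parseval2:
  assumes o: "ortho n k b" and x: "x \<in> carrier_vec n" and y: "y \<in> spn n k b"
  shows "x \<bullet> y = (\<Sum>j<k. (x \<bullet> b j) * (y \<bullet> b j))"
proof -
  have "x \<bullet> y = x \<bullet> pr n k b y" using pr_id[OF o y] by simp
  also have "\<dots> = (\<Sum>j<k. (y \<bullet> b j) * (x \<bullet> b j))" unfolding pr_def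
    using o x by (intro dot_lc) (auto simp: ortho_def)
  finally show ?thesis by (simp add: mult.commute)
qed

lemma gs_ext:
  assumes "ortho n k b" "set xs \<subseteq> carrier_vec n"
  shows "\<exists>k' b'. k \<le> k' \<and> k' \<le> k + length xs \<and> ortho n k' b' \<and> (\<forall>j<k. b' j = b j) \<and> set xs \<subseteq> spn n k' b'"
  using assms
proof (induction xs arbitrary: k b)
  case Nil thus ?case by auto
next
  case (Cons x xs)
  have x: "x \<in> carrier_vec n" and xs: "set xs \<subseteq> carrier_vec n" using Cons.prems by auto
  show ?case
  proof (cases "x \<in> spn n k b")
    case True
    obtain k' b' where h: "k \<le> k'" "k' \<le> k + length xs" "ortho n k' b'" "\<forall>j<k. b' j = b j" "set xs \<subseteq> spn n k' b'"
      using Cons.IH[OF Cons.prems(1) xs] by blast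
    have "spn n k b \<subseteq> spn n k' b'" using h(1,4) by (intro spn_mono) auto
    thus ?thesis using h True by (intro exI[of _ k'] exI[of _ b']) auto
  next
    case False
    define r where "r = x - pr n k b x"
    define b1 where "b1 = b(k := (1 / sqrt (r \<bullet> r)) \<cdot>\<^sub>v r)"
    have e: "ortho n (Suc k) b1" "x \<in> spn n (Suc k) b1" "\<And>j. j < k \<Longrightarrow> b1 j = b j"
      using ortho_extend[OF Cons.prems(1) x False] unfolding r_def b1_def by auto
    obtain k' b' where h: "Suc k \<le> k'" "k' \<le> Suc k + length xs" "ortho n k' b'" "\<forall>j<Suc k. b' j = b1 j" "set xs \<subseteq> spn n k' b'"
      using Cons.IH[OF e(1) xs] by blast
    have "spn n (Suc k) b1 \<subseteq> spn n k' b'" using h(1,4) by (intro spn_mono) auto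
    thus ?thesis using h e by (intro exI[of _ k'] exI[of _ b']) auto
  qed
qed

lemma max_ext:
  assumes c: "closedV n V" and o: "ortho n k b" and bV: "\<forall>j<k. b j \<in> V"
  shows "\<exists>k' b'. k \<le> k' \<and> ortho n k' b' \<and> (\<forall>j<k. b' j = b j) \<and> (\<forall>j<k'. b' j \<in> V) \<and> spn n k' b' = V"
  using o bV
proof (induction "n - k" arbitrary: k b rule: less_induct)
  case less
  show ?case
  proof (cases "V \<subseteq> spn n k b")
    case True
    have "spn n k b \<subseteq> V" using c less.prems(2) by (intro spn_sub) auto
    thus ?thesis using True less.prems by (intro exI[of _ k] exI[of _ b]) auto
  next
    case False
    then obtain x where xV: "x \<in> V" and nx: "x \<notin> spn n k b" by auto
    have x: "x \<in> carrier_vec n" using xV c by (auto simp: closedV_def)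
    define r where "r = x - pr n k b x"
    define b1 where "b1 = b(k := (1 / sqrt (r \<bullet> r)) \<cdot>\<^sub>v r)"
    have e: "ortho n (Suc k) b1" "x \<in> spn n (Suc k) b1" "\<And>j. j < k \<Longrightarrow> b1 j = b j"
      using ortho_extend[OF less.prems(1) x nx] unfolding r_def b1_def by auto
    have "pr n k b x \<in> V" unfolding pr_def using c less.prems(2) by (intro lc_closed) auto
    hence rV: "r \<in> V" unfolding r_def using closedV_minus[OF c xV] by simp
    have b1V: "\<forall>j<Suc k. b1 j \<in> V"
      using less.prems(2) rV c unfolding b1_def by (auto simp: closedV_def less_Suc_eq)
    have "Suc k \<le> n" using ortho_le[OF e(1)] .
    hence lt: "n - Suc k < n - k" by simp
    obtain k' b' where h: "Suc k \<le> k'" "ortho n k' b'" "\<forall>j<Suc k. b' j = b1 j" "\<forall>j<k'. b' j \<in> V" "spn n k' b' = V"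
      using less.hyps[OF lt e(1) b1V] by blast
    thus ?thesis using e(3) by (intro exI[of _ k'] exI[of _ b']) auto
  qed
qed

lemma closedV_carrier: "closedV n (carrier_vec n)"
  unfolding closedV_def by auto

lemma ortho_full_spn:
  assumes o: "ortho n n b" shows "spn n n b = carrier_vec n"
proof -
  obtain k' b' where h: "n \<le> k'" "ortho n k' b'" "\<forall>j<n. b' j = b j" "spn n k' b' = carrier_vec n"
    using max_ext[OF closedV_carrier o] o by (auto simp: ortho_def)
  have "k' = n" using ortho_le[OF h(2)] h(1) by simp
  hence "spn n n b' = carrier_vec n" using h by simp
  moreover have "lc n n b' = lc n n b" using h(3) by (intro ext lc_cong) auto
  ultimately show ?thesis unfolding spn_def by simp
qed

lemma ortho_full_expand:
  assumes o: "ortho n n b" and x: "x \<in> carrier_vec n"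
  shows "x = pr n n b x"
  using pr_id[OF o] ortho_full_spn[OF o] x by simp

lemma ortho_full_sum:
  assumes o: "ortho n n b" and i: "i < n" and l: "l < n"
  shows "(\<Sum>j<n. b j $ i * b j $ l) = (if i = l then 1 else 0)"
proof -
  have "unit_vec n l = pr n n b (unit_vec n l)" by (rule ortho_full_expand[OF o]) simp
  hence "unit_vec n l $ i = pr n n b (unit_vec n l) $ i" by simp
  also have "\<dots> = (\<Sum>j<n. (unit_vec n l \<bullet> b j) * b j $ i)" unfolding pr_def using i by simp
  also have "\<dots> = (\<Sum>j<n. b j $ i * b j $ l)"
    using o l by (intro sum.cong refl) (auto simp: ortho_def)
  finally show ?thesis using i l by simp
qed



lemma submodule_closedV:
  assumes "submodule (class_ring :: real ring) N (module_vec TYPE(real) n)"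
  shows "closedV n N"
  using assms unfolding submodule_def closedV_def
  by (auto simp: module_vec_simps class_ring_simps)

lemma closedV_submodule:
  assumes "closedV n N"
  shows "submodule (class_ring :: real ring) N (module_vec TYPE(real) n)"
proof -
  interpret vec_space "TYPE(real)" n .
  show ?thesis using assms unfolding submodule_def closedV_def
    by (auto simp: module_vec_simps class_ring_simps intro: module_axioms)
qed

lemma rsubspace_closedV: "rsubspace n V \<Longrightarrow> closedV n V"
  unfolding rsubspace_def VectorSpace.subspace_def VectorSpace.subspace_def by (intro submodule_closedV) auto

lemma closedV_rsubspace: "closedV n V \<Longrightarrow> rsubspace n V"
  unfolding rsubspace_def VectorSpace.subspace_def VectorSpace.subspace_def using closedV_submodule vec_vs by auto

lemma closedV_Int: "closedV n V \<Longrightarrow> closedV n W \<Longrightarrow> closedV n (V \<inter> W)"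
  unfolding closedV_def by auto

lemma lc_unit:
  assumes i: "i < k" and b: "b i \<in> carrier_vec n"
  shows "lc n k b (\<lambda>j. if j = i then 1 else 0) = b i"
proof (rule eq_vecI)
  fix l assume "l < dim_vec (b i)"
  hence l: "l < n" using b by simp
  have "(\<Sum>j<k. (if j = i then 1 else 0) * b j $ l) = (\<Sum>j<k. if j = i then b j $ l else 0)"
    by (intro sum.cong refl) simp
  also have "\<dots> = b i $ l" using i by simp
  finally show "lc n k b (\<lambda>j. if j = i then 1 else 0) $ l = b i $ l" using l by simp
qed (use b in simp)

lemma ortho_in_spn: "ortho n k b \<Longrightarrow> i < k \<Longrightarrow> b i \<in> spn n k b"
  using lc_unit[of i k b n] unfolding spn_def ortho_def by (metis rangeI)

lemma rspan_spn:
  assumes o: "ortho n k b"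
  shows "rspan n (b ` {..<k}) = spn n k b"
proof -
  interpret vec_space "TYPE(real)" n .
  have S: "b ` {..<k} \<subseteq> carrier_vec n" using o by (auto simp: ortho_def)
  have 1: "span (b ` {..<k}) \<subseteq> spn n k b"
  proof (rule span_is_subset)
    show "b ` {..<k} \<subseteq> spn n k b"
    proof
      fix x assume "x \<in> b ` {..<k}"
      then obtain i where i: "i < k" "x = b i" by auto
      thus "x \<in> spn n k b" using ortho_in_spn[OF o] by simp
    qed
    show "submodule class_ring (spn n k b) V" by (rule closedV_submodule[OF closedV_spn])
  qed
  have 2: "spn n k b \<subseteq> span (b ` {..<k})"
  proof (rule spn_sub)
    show "closedV n (span (b ` {..<k}))" by (rule submodule_closedV, rule span_is_submodule[OF S])
    fix j assume "j < k" thus "b j \<in> span (b ` {..<k})" using in_own_span[OF S] by auto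
  qed
  show ?thesis unfolding rspan_def using 1 2 by auto
qed

lemma ortho_inj: "ortho n k b \<Longrightarrow> inj_on b {..<k}"
  unfolding inj_on_def ortho_def by (metis lessThan_iff zero_neq_one)

lemma ortho_lin_indpt:
  assumes o: "ortho n k b"
  shows "\<not> LinearCombinations.module.lin_dep (class_ring :: real ring) (module_vec TYPE(real) n) (b ` {..<k})"
proof -
  interpret vec_space "TYPE(real)" n .
  have S: "b ` {..<k} \<subseteq> carrier_vec n" using o by (auto simp: ortho_def)
  show ?thesis
  proof
    assume "lin_dep (b ` {..<k})"
    then obtain A a v where A: "finite A" "A \<subseteq> b ` {..<k}" "lincomb a A = 0\<^sub>v n" "v \<in> A" "a v \<noteq> 0"
      unfolding lin_dep_def by auto
    obtain i where i: "i < k" "v = b i" using A by auto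
    have Ac: "A \<subseteq> carrier_vec n" using A S by auto
    have lcc: "lincomb a A \<in> carrier_vec n" using A by simp
    have "lincomb a A \<bullet> b i = (\<Sum>l<n. (\<Sum>x\<in>A. a x * x $ l) * b i $ l)"
      using lcc o i by (subst dot_sum[of _ n]) (auto simp: ortho_def lincomb_index[OF _ Ac] intro!: sum.cong)
    also have "\<dots> = (\<Sum>x\<in>A. a x * (\<Sum>l<n. x $ l * b i $ l))"
      by (simp add: sum_distrib_left sum_distrib_right sum.swap[of _ "{..<n}"] mult.assoc)
    also have "\<dots> = (\<Sum>x\<in>A. a x * (x \<bullet> b i))"
      using Ac o i by (intro sum.cong refl) (auto simp: ortho_def dot_sum)
    also have "\<dots> = (\<Sum>x\<in>A. if x = v then a x else 0)"
    proof (intro sum.cong refl)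
      fix x assume "x \<in> A"
      then obtain j where j: "j < k" "x = b j" using A by auto
      have "x \<bullet> b i = (if x = v then 1 else 0)"
      proof (cases "j = i")
        case True thus ?thesis using o i j by (auto simp: ortho_def)
      next
        case False
        hence "x \<noteq> v" using ortho_inj[OF o] i j unfolding inj_on_def by auto
        thus ?thesis using o i j False by (auto simp: ortho_def)
      qed
      thus "a x * (x \<bullet> b i) = (if x = v then a x else 0)" by simp
    qed
    also have "\<dots> = a v" using A by simp
    finally show False using A o i by (simp add: ortho_def)
  qed
qed

lemma rdim_ortho:
  assumes U: "rsubspace n U" and o: "ortho n k b" and sp: "spn n k b = U"
  shows "rdim n U = k"
proof -
  interpret vec_space "TYPE(real)" n .
  have S: "b ` {..<k} \<subseteq> carrier_vec n" using o by (auto simp: ortho_def)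
  have sub: "submodule class_ring U V" using U unfolding rsubspace_def VectorSpace.subspace_def by auto
  have SV: "b ` {..<k} \<subseteq> U" using ortho_in_spn[OF o] sp by auto
  interpret W: vectorspace class_ring "vs U" using subspace_is_vs U unfolding rsubspace_def by auto
  have "W.basis (b ` {..<k})"
    unfolding W.basis_def
    using span_li_not_depend[OF SV sub] ortho_lin_indpt[OF o] rspan_spn[OF o] sp SV
    unfolding rspan_def by auto
  hence "W.dim = card (b ` {..<k})" by (intro W.dim_basis) auto
  also have "\<dots> = k" using ortho_inj[OF o] by (simp add: card_image)
  finally show ?thesis unfolding rdim_def .
qed


lemma sub_basis_ext:
  assumes U: "rsubspace n U" and o: "ortho n k b" and bU: "\<forall>j<k. b j \<in> U"
  shows "\<exists>b'. ortho n (rdim n U) b' \<and> (\<forall>j<k. b' j = b j) \<and> spn n (rdim n U) b' = U \<and> k \<le> rdim n U \<and> (\<forall>j<rdim n U. b' j \<in> U)"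
proof -
  obtain k' b' where h: "k \<le> k'" "ortho n k' b'" "\<forall>j<k. b' j = b j" "\<forall>j<k'. b' j \<in> U" "spn n k' b' = U"
    using max_ext[OF rsubspace_closedV[OF U] o bU] by blast
  have "rdim n U = k'" using rdim_ortho[OF U h(2) h(5)] .
  thus ?thesis using h by auto
qed

lemma sub_basis:
  assumes U: "rsubspace n U"
  shows "\<exists>b. ortho n (rdim n U) b \<and> spn n (rdim n U) b = U \<and> (\<forall>j<rdim n U. b j \<in> U)"
  using sub_basis_ext[OF U, of 0 undefined] by (auto simp: ortho_def)

lemma orth_proj_spn:
  assumes o: "ortho n k b" and x: "x \<in> carrier_vec n"
  shows "orth_proj n (spn n k b) x = pr n k b x"
  unfolding orth_proj_def
proof (rule the_equality)
  show "pr n k b x \<in> spn n k b \<and> (\<forall>w\<in>spn n k b. (x - pr n k b x) \<bullet> w = 0)"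
    using pr_in_spn resid_orth_spn[OF o x] by auto
next
  fix y assume y: "y \<in> spn n k b \<and> (\<forall>w\<in>spn n k b. (x - y) \<bullet> w = 0)"
  have yc: "y \<in> carrier_vec n" using y unfolding spn_def by auto
  have d: "y - pr n k b x \<in> spn n k b"
    using closedV_minus[OF closedV_spn] y pr_in_spn by blast
  have "(x - pr n k b x) \<bullet> (y - pr n k b x) = 0" using resid_orth_spn[OF o x d] .
  moreover have "(x - y) \<bullet> (y - pr n k b x) = 0" using y d by auto
  ultimately have "(y - pr n k b x) \<bullet> (y - pr n k b x) = 0"
  proof -
    assume a1: "(x - pr n k b x) \<bullet> (y - pr n k b x) = 0" and a2: "(x - y) \<bullet> (y - pr n k b x) = 0"
    have "y - pr n k b x = (x - pr n k b x) - (x - y)" using x yc by (intro eq_vecI) auto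
    hence "(y - pr n k b x) \<bullet> (y - pr n k b x) = ((x - pr n k b x) - (x - y)) \<bullet> (y - pr n k b x)" by simp
    also have "\<dots> = (x - pr n k b x) \<bullet> (y - pr n k b x) - (x - y) \<bullet> (y - pr n k b x)"
      using x yc by (intro minus_scalar_prod_distrib[of _ n]) auto
    finally show ?thesis using a1 a2 by simp
  qed
  hence "y - pr n k b x = 0\<^sub>v n" using self_dot_zero[of "y - pr n k b x" n] yc by simp
  moreover have "y = (y - pr n k b x) + pr n k b x" using yc by (intro eq_vecI) auto
  ultimately show "y = pr n k b x" by simp
qed

definition pm :: "nat \<Rightarrow> nat \<Rightarrow> (nat \<Rightarrow> real vec) \<Rightarrow> real mat" where
  "pm n k b = mat n n (\<lambda>(i,l). \<Sum>j<k. b j $ i * b j $ l)"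

lemma proj_spn:
  assumes o: "ortho n k b"
  shows "proj n (spn n k b) = pm n k b"
  unfolding proj_def pm_def
proof (rule eq_matI)
  fix i l assume i: "i < dim_row (mat n n (\<lambda>(i,l). \<Sum>j<k. b j $ i * b j $ l))"
    and l: "l < dim_col (mat n n (\<lambda>(i,l). \<Sum>j<k. b j $ i * b j $ l))"
  have i': "i < n" and l': "l < n" using i l by auto
  have "orth_proj n (spn n k b) (unit_vec n l) $ i = pr n k b (unit_vec n l) $ i"
    using orth_proj_spn[OF o] by simp
  also have "\<dots> = (\<Sum>j<k. (unit_vec n l \<bullet> b j) * b j $ i)" unfolding pr_def using i' by simp
  also have "\<dots> = (\<Sum>j<k. b j $ i * b j $ l)"
    using o l' by (intro sum.cong refl) (auto simp: ortho_def)
  finally show "mat n n (\<lambda>(i, j). orth_proj n (spn n k b) (unit_vec n j) $ i) $$ (i, l) =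
     mat n n (\<lambda>(i,l). \<Sum>j<k. b j $ i * b j $ l) $$ (i, l)" using i' l' by simp
qed auto

lemma pm_carrier[simp]: "pm n k b \<in> carrier_mat n n"
  unfolding pm_def by simp

lemma pm_index: "i < n \<Longrightarrow> l < n \<Longrightarrow> pm n k b $$ (i,l) = (\<Sum>j<k. b j $ i * b j $ l)"
  unfolding pm_def by simp

lemma pm_mult:
  assumes o: "ortho n k b" and x: "x \<in> carrier_vec n"
  shows "pm n k b *\<^sub>v x = pr n k b x"
proof (rule eq_vecI)
  fix i assume "i < dim_vec (pr n k b x)"
  hence i: "i < n" by simp
  have "(pm n k b *\<^sub>v x) $ i = (\<Sum>l<n. (\<Sum>j<k. b j $ i * b j $ l) * x $ l)"
    using i x unfolding mult_mat_vec_def pm_def by (simp add: dot_sum[of _ n] row_def)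
  also have "\<dots> = (\<Sum>l<n. \<Sum>j<k. b j $ i * b j $ l * x $ l)"
    by (simp add: sum_distrib_right)
  also have "\<dots> = (\<Sum>j<k. \<Sum>l<n. b j $ i * b j $ l * x $ l)" by (rule sum.swap)
  also have "\<dots> = (\<Sum>j<k. (\<Sum>l<n. x $ l * b j $ l) * b j $ i)"
    by (intro sum.cong refl) (simp add: sum_distrib_left mult_ac)
  also have "\<dots> = (\<Sum>j<k. (x \<bullet> b j) * b j $ i)"
    using o x by (intro sum.cong refl) (auto simp: ortho_def dot_sum)
  also have "\<dots> = pr n k b x $ i" unfolding pr_def using i by simp
  finally show "(pm n k b *\<^sub>v x) $ i = pr n k b x $ i" .
qed (simp add: pm_def)



lemma mv_index:
  "A \<in> carrier_mat nr nc \<Longrightarrow> y \<in> carrier_vec nc \<Longrightarrow> i < nr \<Longrightarrow> (A *\<^sub>v y) $ i = (\<Sum>l<nc. A $$ (i,l) * y $ l)"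
  by (simp add: scalar_prod_def row_def lessThan_atLeast0)

lemma sym_eig:
  fixes B :: "real mat"
  assumes B: "B \<in> carrier_mat r r" and sym: "\<And>i l. i < r \<Longrightarrow> l < r \<Longrightarrow> B $$ (i,l) = B $$ (l,i)" and r: "0 < r"
  shows "\<exists>\<mu> y. y \<in> carrier_vec r \<and> y \<noteq> 0\<^sub>v r \<and> B *\<^sub>v y = \<mu> \<cdot>\<^sub>v y"
proof -
  define Bc where "Bc = map_mat complex_of_real B"
  have Bc: "Bc \<in> carrier_mat r r" using B unfolding Bc_def by simp
  have "degree (char_poly Bc) = r" using degree_monic_char_poly[OF Bc] by simp
  hence "\<not> constant (poly (char_poly Bc))" using r by (simp add: constant_degree)
  then obtain z where z: "poly (char_poly Bc) z = 0" using fundamental_theorem_of_algebra by blast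
  hence "eigenvalue Bc z" using eigenvalue_root_char_poly[OF Bc] by simp
  then obtain v where v: "v \<in> carrier_vec r" "v \<noteq> 0\<^sub>v r" "Bc *\<^sub>v v = z \<cdot>\<^sub>v v"
    unfolding eigenvalue_def eigenvector_def using Bc by auto
  have E: "(\<Sum>l<r. complex_of_real (B $$ (i,l)) * v $ l) = z * v $ i" if i: "i < r" for i
  proof -
    have "(Bc *\<^sub>v v) $ i = (z \<cdot>\<^sub>v v) $ i" using v by simp
    also have "(Bc *\<^sub>v v) $ i = (\<Sum>l<r. Bc $$ (i,l) * v $ l)" by (rule mv_index[OF Bc v(1) i])
    also have "\<dots> = (\<Sum>l<r. complex_of_real (B $$ (i,l)) * v $ l)"
      using B i unfolding Bc_def by (intro sum.cong refl) auto
    finally show ?thesis using i v by simp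
  qed
  define S where "S = (\<Sum>i<r. \<Sum>l<r. cnj (v $ i) * complex_of_real (B $$ (i,l)) * v $ l)"
  define N where "N = (\<Sum>i<r. cnj (v $ i) * v $ i)"
  have SN: "S = z * N"
  proof -
    have "S = (\<Sum>i<r. cnj (v $ i) * (\<Sum>l<r. complex_of_real (B $$ (i,l)) * v $ l))"
      unfolding S_def by (simp add: sum_distrib_left mult.assoc)
    also have "\<dots> = (\<Sum>i<r. cnj (v $ i) * (z * v $ i))" by (intro sum.cong refl) (simp add: E)
    also have "\<dots> = z * N" unfolding N_def by (simp add: sum_distrib_left mult_ac)
    finally show ?thesis .
  qed
  have cS: "cnj S = S"
  proof -
    have "cnj S = (\<Sum>i<r. \<Sum>l<r. v $ i * complex_of_real (B $$ (i,l)) * cnj (v $ l))"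
      unfolding S_def by simp
    also have "\<dots> = (\<Sum>l<r. \<Sum>i<r. v $ i * complex_of_real (B $$ (i,l)) * cnj (v $ l))"
      by (rule sum.swap)
    also have "\<dots> = S" unfolding S_def
      by (intro sum.cong refl) (simp add: sym mult_ac)
    finally show ?thesis .
  qed
  define Nr where "Nr = (\<Sum>i<r. (cmod (v $ i))^2)"
  have NNr: "N = complex_of_real Nr"
    unfolding N_def Nr_def by (simp add: complex_norm_square mult.commute del: of_real_power)
  have "\<exists>i<r. v $ i \<noteq> 0" using v by (metis carrier_vecD eq_vecI index_zero_vec(1) index_zero_vec(2))
  then obtain i0 where i0: "i0 < r" "v $ i0 \<noteq> 0" by auto
  have Npos: "Nr > 0" unfolding Nr_def
    by (rule sum_pos2[of _ i0]) (use i0 in auto)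
  have "cnj z = z"
  proof -
    have zz: "z = S / N" using SN Npos NNr by simp
    have "cnj N = N" using NNr by simp
    thus ?thesis using zz cS by simp
  qed
  hence Imz: "Im z = 0" by (metis cnj.simps(2) neg_equal_zero)
  define \<mu> where "\<mu> = Re z"
  have zmu: "z = complex_of_real \<mu>" using Imz unfolding \<mu>_def by (simp add: complex_eq_iff)
  define y1 where "y1 = vec r (\<lambda>i. Re (v $ i))"
  define y2 where "y2 = vec r (\<lambda>i. Im (v $ i))"
  have y1e: "B *\<^sub>v y1 = \<mu> \<cdot>\<^sub>v y1"
  proof (rule eq_vecI)
    fix i assume "i < dim_vec (\<mu> \<cdot>\<^sub>v y1)" hence i: "i < r" unfolding y1_def by simp
    have "(B *\<^sub>v y1) $ i = (\<Sum>l<r. B $$ (i,l) * Re (v $ l))"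
      using mv_index[OF B _ i, of y1] unfolding y1_def by simp
    also have "\<dots> = Re (\<Sum>l<r. complex_of_real (B $$ (i,l)) * v $ l)" by (simp add: Re_sum)
    also have "\<dots> = \<mu> * Re (v $ i)" using E[OF i] zmu by simp
    finally show "(B *\<^sub>v y1) $ i = (\<mu> \<cdot>\<^sub>v y1) $ i" using i unfolding y1_def by simp
  qed (use B in \<open>simp add: y1_def\<close>)
  have y2e: "B *\<^sub>v y2 = \<mu> \<cdot>\<^sub>v y2"
  proof (rule eq_vecI)
    fix i assume "i < dim_vec (\<mu> \<cdot>\<^sub>v y2)" hence i: "i < r" unfolding y2_def by simp
    have "(B *\<^sub>v y2) $ i = (\<Sum>l<r. B $$ (i,l) * Im (v $ l))"
      using mv_index[OF B _ i, of y2] unfolding y2_def by simp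
    also have "\<dots> = Im (\<Sum>l<r. complex_of_real (B $$ (i,l)) * v $ l)" by (simp add: Im_sum)
    also have "\<dots> = \<mu> * Im (v $ i)" using E[OF i] zmu by simp
    finally show "(B *\<^sub>v y2) $ i = (\<mu> \<cdot>\<^sub>v y2) $ i" using i unfolding y2_def by simp
  qed (use B in \<open>simp add: y2_def\<close>)
  show ?thesis
  proof (cases "Re (v $ i0) = 0")
    case True
    hence "Im (v $ i0) \<noteq> 0" using i0 by (simp add: complex_eq_iff)
    hence "y2 \<noteq> 0\<^sub>v r" using i0 unfolding y2_def by (metis index_vec index_zero_vec(1))
    thus ?thesis using y2e by (intro exI[of _ \<mu>] exI[of _ y2]) (auto simp: y2_def)
  next
    case False
    hence "y1 \<noteq> 0\<^sub>v r" using i0 unfolding y1_def by (metis index_vec index_zero_vec(1))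
    thus ?thesis using y1e by (intro exI[of _ \<mu>] exI[of _ y1]) (auto simp: y1_def)
  qed
qed


lemma rdim_carrier: "rdim n (carrier_vec n) = n"
proof -
  have "(module_vec TYPE(real) n)\<lparr>carrier := carrier_vec n\<rparr> = module_vec TYPE(real) n"
    by (simp add: module_vec_def)
  thus ?thesis unfolding rdim_def using vec_space.dim_is_n by metis
qed

lemma full_basis_ext:
  assumes o: "ortho n j v"
  shows "\<exists>w. ortho n n w \<and> (\<forall>k<j. w k = v k)"
proof -
  obtain k' w where h: "j \<le> k'" "ortho n k' w" "\<forall>k<j. w k = v k" "spn n k' w = carrier_vec n"
    using max_ext[OF closedV_carrier o] o by (auto simp: ortho_def)
  have "rdim n (carrier_vec n) = k'"
    by (rule rdim_ortho[OF closedV_rsubspace[OF closedV_carrier] h(2) h(4)])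
  thus ?thesis using h rdim_carrier by auto
qed

lemma ortho_add:
  assumes o: "ortho n j v" and u: "u \<in> carrier_vec n" and ou: "\<forall>k<j. v k \<bullet> u = 0" and uu: "u \<bullet> u = 1"
  shows "ortho n (Suc j) (v(j := u))"
  unfolding ortho_def
proof (intro conjI allI impI)
  fix i assume "i < Suc j" thus "(v(j := u)) i \<in> carrier_vec n" using o u by (auto simp: ortho_def less_Suc_eq)
next
  fix i l assume i: "i < Suc j" and l: "l < Suc j"
  have vc: "\<And>k. k < j \<Longrightarrow> v k \<in> carrier_vec n" using o by (simp add: ortho_def)
  have uo: "\<And>k. k < j \<Longrightarrow> u \<bullet> v k = 0" using ou vc u by (simp add: comm_scalar_prod[of _ n])
  show "(v(j := u)) i \<bullet> (v(j := u)) l = (if i = l then 1 else 0)"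
    using i l o ou uo uu by (auto simp: ortho_def less_Suc_eq)
qed

lemma sym_dot:
  fixes A :: "real mat"
  assumes A: "A \<in> carrier_mat n n" and sym: "\<And>i l. i < n \<Longrightarrow> l < n \<Longrightarrow> A $$ (i,l) = A $$ (l,i)"
    and x: "x \<in> carrier_vec n" and y: "y \<in> carrier_vec n"
  shows "x \<bullet> (A *\<^sub>v y) = (A *\<^sub>v x) \<bullet> y"
proof -
  have "x \<bullet> (A *\<^sub>v y) = (\<Sum>i<n. x $ i * (A *\<^sub>v y) $ i)" using A x y by (simp add: dot_sum[of _ n])
  also have "\<dots> = (\<Sum>i<n. x $ i * (\<Sum>l<n. A $$ (i,l) * y $ l))"
    by (intro sum.cong refl) (simp add: mv_index[OF A y])
  also have "\<dots> = (\<Sum>i<n. \<Sum>l<n. x $ i * A $$ (i,l) * y $ l)" by (simp add: sum_distrib_left mult.assoc)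
  also have "\<dots> = (\<Sum>l<n. \<Sum>i<n. x $ i * A $$ (i,l) * y $ l)" by (rule sum.swap)
  also have "\<dots> = (\<Sum>l<n. (\<Sum>i<n. A $$ (l,i) * x $ i) * y $ l)"
    by (intro sum.cong refl) (simp add: sum_distrib_right sum_distrib_left sym mult_ac)
  also have "\<dots> = (\<Sum>l<n. (A *\<^sub>v x) $ l * y $ l)"
    by (intro sum.cong refl) (simp add: mv_index[OF A x])
  also have "\<dots> = (A *\<^sub>v x) \<bullet> y" using A x y by (simp add: dot_sum[of _ n])
  finally show ?thesis .
qed

lemma shift_sum:
  fixes f :: "nat \<Rightarrow> real"
  assumes "j \<le> n"
  shows "(\<Sum>k<n. if k < j then 0 else f (k - j)) = (\<Sum>c<n - j. f c)"
proof -
  obtain d where n: "n = j + d" using assms le_Suc_ex by blast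
  have "(\<Sum>k<j + d. if k < j then 0 else f (k - j)) = (\<Sum>c<d. f c)"
    by (induction d) auto
  thus ?thesis using n by simp
qed

lemma spec_partial:
  fixes A :: "real mat"
  assumes A: "A \<in> carrier_mat n n" and sym: "\<And>i l. i < n \<Longrightarrow> l < n \<Longrightarrow> A $$ (i,l) = A $$ (l,i)"
  shows "j \<le> n \<Longrightarrow> \<exists>v lam. ortho n j v \<and> (\<forall>k<j. A *\<^sub>v v k = lam k \<cdot>\<^sub>v v k)"
proof (induction j)
  case 0 thus ?case by (auto simp: ortho_def)
next
  case (Suc j)
  then obtain v lam where o: "ortho n j v" and ev: "\<forall>k<j. A *\<^sub>v v k = lam k \<cdot>\<^sub>v v k" by auto
  obtain w where ow: "ortho n n w" and wv: "\<forall>k<j. w k = v k" using full_basis_ext[OF o] by blast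
  have wc: "\<And>k. k < n \<Longrightarrow> w k \<in> carrier_vec n" using ow by (simp add: ortho_def)
  define r where "r = n - j"
  have r: "0 < r" using Suc.prems unfolding r_def by simp
  define B where "B = mat r r (\<lambda>(a,c). w (j+a) \<bullet> (A *\<^sub>v w (j+c)))"
  have Bc: "B \<in> carrier_mat r r" unfolding B_def by simp
  have Bsym: "B $$ (a,c) = B $$ (c,a)" if "a < r" "c < r" for a c
  proof -
    have ac: "j + a < n" "j + c < n" using that unfolding r_def by auto
    have "w (j+a) \<bullet> (A *\<^sub>v w (j+c)) = (A *\<^sub>v w (j+a)) \<bullet> w (j+c)"
      by (rule sym_dot[OF A sym wc[OF ac(1)] wc[OF ac(2)]])
    also have "\<dots> = w (j+c) \<bullet> (A *\<^sub>v w (j+a))"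
      using A wc[OF ac(1)] wc[OF ac(2)] by (simp add: comm_scalar_prod[of _ n])
    finally show ?thesis using that unfolding B_def by simp
  qed
  obtain \<mu> y where y: "y \<in> carrier_vec r" "y \<noteq> 0\<^sub>v r" "B *\<^sub>v y = \<mu> \<cdot>\<^sub>v y"
    using sym_eig[OF Bc Bsym r] by blast
  define coef where "coef = (\<lambda>k. if k < j then 0 else y $ (k - j))"
  define z where "z = lc n n w coef"
  have zc: "z \<in> carrier_vec n" unfolding z_def by simp
  have Azc: "A *\<^sub>v z \<in> carrier_vec n" using A zc by simp
  have wz: "\<And>k. k < n \<Longrightarrow> w k \<bullet> z = coef k" unfolding z_def using ortho_dot_lc[OF ow] by simp
  have key: "(A *\<^sub>v z) \<bullet> w k = \<mu> * coef k" if k: "k < n" for k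
  proof -
    have "(A *\<^sub>v z) \<bullet> w k = z \<bullet> (A *\<^sub>v w k)" using sym_dot[OF A sym zc wc[OF k]] by simp
    show ?thesis
    proof (cases "k < j")
      case True
      have "z \<bullet> (A *\<^sub>v w k) = z \<bullet> (lam k \<cdot>\<^sub>v w k)" using ev wv True by simp
      also have "\<dots> = lam k * (w k \<bullet> z)" using zc wc[OF k] by (simp add: comm_scalar_prod[of _ n])
      also have "\<dots> = 0" using wz[OF k] True unfolding coef_def by simp
      finally show ?thesis using `(A *\<^sub>v z) \<bullet> w k = z \<bullet> (A *\<^sub>v w k)` True unfolding coef_def by simp
    next
      case False
      define a where "a = k - j"
      have a: "a < r" "k = j + a" using False k unfolding a_def r_def by auto
      have "z \<bullet> (A *\<^sub>v w k) = (\<Sum>k'<n. coef k' * (w k' \<bullet> (A *\<^sub>v w k)))"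
        unfolding z_def using A wc[OF k] by (intro lc_dot) (auto intro: wc)
      also have "\<dots> = (\<Sum>k'<n. if k' < j then 0 else y $ (k' - j) * (w (j + (k' - j)) \<bullet> (A *\<^sub>v w k)))"
        unfolding coef_def by (intro sum.cong refl) auto
      also have "\<dots> = (\<Sum>c<r. y $ c * (w (j + c) \<bullet> (A *\<^sub>v w k)))"
        unfolding r_def using Suc.prems by (intro shift_sum) simp
      also have "\<dots> = (\<Sum>c<r. B $$ (a,c) * y $ c)"
      proof (intro sum.cong refl)
        fix c assume "c \<in> {..<r}"
        hence c: "c < r" by simp
        have "B $$ (a,c) = B $$ (c,a)" using Bsym[OF a(1) c] .
        also have "\<dots> = w (j + c) \<bullet> (A *\<^sub>v w k)" using a c unfolding B_def by simp
        finally show "y $ c * (w (j + c) \<bullet> (A *\<^sub>v w k)) = B $$ (a,c) * y $ c" by simp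
      qed
      also have "\<dots> = (B *\<^sub>v y) $ a" using mv_index[OF Bc y(1) a(1)] by simp
      also have "\<dots> = \<mu> * coef k" using y(3) a y(1) unfolding coef_def by simp
      finally show ?thesis using `(A *\<^sub>v z) \<bullet> w k = z \<bullet> (A *\<^sub>v w k)` by simp
    qed
  qed
  have Az: "A *\<^sub>v z = \<mu> \<cdot>\<^sub>v z"
  proof -
    have "A *\<^sub>v z = pr n n w (A *\<^sub>v z)" by (rule ortho_full_expand[OF ow Azc])
    also have "\<dots> = lc n n w (\<lambda>k. \<mu> * coef k)" unfolding pr_def by (rule lc_cong) (auto simp: key)
    also have "\<dots> = \<mu> \<cdot>\<^sub>v z" unfolding z_def lc_smult ..
    finally show ?thesis .
  qed
  have zne: "z \<noteq> 0\<^sub>v n"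
  proof
    assume z0: "z = 0\<^sub>v n"
    have "y = 0\<^sub>v r"
    proof (rule eq_vecI)
      fix a assume "a < dim_vec (0\<^sub>v r :: real vec)" hence a: "a < r" by simp
      have "w (j + a) \<bullet> z = 0" using z0 wc[of "j+a"] a unfolding r_def by simp
      hence "coef (j + a) = 0" using wz[of "j + a"] a unfolding r_def by simp
      thus "y $ a = 0\<^sub>v r $ a" using a unfolding coef_def by simp
    qed (use y in simp)
    thus False using y by simp
  qed
  have zz: "z \<bullet> z > 0" using self_dot_nonneg[of z] self_dot_zero[OF zc] zne by fastforce
  define s where "s = sqrt (z \<bullet> z)"
  have s: "s > 0" using zz unfolding s_def by simp
  have ss: "s * s = z \<bullet> z" unfolding s_def using zz by (simp add: real_sqrt_mult_self)
  define u where "u = (1 / s) \<cdot>\<^sub>v z"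
  have uc: "u \<in> carrier_vec n" unfolding u_def using zc by simp
  have uu: "u \<bullet> u = 1" unfolding u_def using zc s ss zz by (simp add: field_simps)
  have ou: "\<forall>k<j. v k \<bullet> u = 0"
  proof (intro allI impI)
    fix k assume k: "k < j"
    hence kn: "k < n" using Suc.prems by simp
    have "v k \<bullet> u = (1 / s) * (w k \<bullet> z)" unfolding u_def using wv k zc wc[OF kn] by simp
    also have "\<dots> = 0" using wz[OF kn] k unfolding coef_def by simp
    finally show "v k \<bullet> u = 0" .
  qed
  have Au: "A *\<^sub>v u = \<mu> \<cdot>\<^sub>v u"
    unfolding u_def using mult_mat_vec[OF A zc] Az by (simp add: smult_smult_assoc mult.commute)
  have o': "ortho n (Suc j) (v(j := u))" by (rule ortho_add[OF o uc ou uu])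
  have "\<forall>k<Suc j. A *\<^sub>v (v(j := u)) k = (lam(j := \<mu>)) k \<cdot>\<^sub>v (v(j := u)) k"
    using ev Au by (auto simp: less_Suc_eq)
  with o' show ?case by blast
qed



lemma mm_index:
  "A \<in> carrier_mat nr m \<Longrightarrow> B \<in> carrier_mat m nc \<Longrightarrow> i < nr \<Longrightarrow> j < nc \<Longrightarrow>
   (A * B) $$ (i,j) = (\<Sum>k<m. A $$ (i,k) * B $$ (k,j))"
  by (simp add: scalar_prod_def row_def col_def lessThan_atLeast0)

lemma char_poly_spec:
  fixes A :: "real mat"
  assumes A: "A \<in> carrier_mat n n" and o: "ortho n n v" and ev: "\<forall>k<n. A *\<^sub>v v k = lam k \<cdot>\<^sub>v v k"
  shows "char_poly A = (\<Prod>x\<leftarrow>map lam [0..<n]. [:- x, 1:])"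
proof -
  define Vm where "Vm = mat n n (\<lambda>(i,k). v k $ i)"
  define Vt where "Vt = mat n n (\<lambda>(k,i). v k $ i)"
  define D where "D = mat n n (\<lambda>(i,k). if i = k then lam i else 0)"
  have c: "Vm \<in> carrier_mat n n" "Vt \<in> carrier_mat n n" "D \<in> carrier_mat n n"
    unfolding Vm_def Vt_def D_def by auto
  have vc: "\<And>k. k < n \<Longrightarrow> v k \<in> carrier_vec n" using o by (simp add: ortho_def)
  have 1: "Vm * Vt = 1\<^sub>m n"
  proof (rule eq_matI)
    fix i l assume "i < dim_row (1\<^sub>m n :: real mat)" "l < dim_col (1\<^sub>m n :: real mat)"
    hence il: "i < n" "l < n" by auto
    have "(Vm * Vt) $$ (i,l) = (\<Sum>k<n. v k $ i * v k $ l)"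
      using il c by (simp add: mm_index[of _ n n] Vm_def Vt_def scalar_prod_def lessThan_atLeast0)
    also have "\<dots> = (if i = l then 1 else 0)" by (rule ortho_full_sum[OF o il])
    finally show "(Vm * Vt) $$ (i,l) = 1\<^sub>m n $$ (i,l)" using il by simp
  qed (use c in auto)
  have 2: "Vt * Vm = 1\<^sub>m n"
  proof (rule eq_matI)
    fix i l assume "i < dim_row (1\<^sub>m n :: real mat)" "l < dim_col (1\<^sub>m n :: real mat)"
    hence il: "i < n" "l < n" by auto
    have "(Vt * Vm) $$ (i,l) = (\<Sum>k<n. v i $ k * v l $ k)"
      using il c by (simp add: mm_index[of _ n n] Vm_def Vt_def scalar_prod_def lessThan_atLeast0)
    also have "\<dots> = v i \<bullet> v l" using vc il by (simp add: dot_sum[of _ n])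
    also have "\<dots> = (if i = l then 1 else 0)" using o il by (simp add: ortho_def)
    finally show "(Vt * Vm) $$ (i,l) = 1\<^sub>m n $$ (i,l)" using il by simp
  qed (use c in auto)
  have 3: "A = Vm * D * Vt"
  proof (rule eq_matI)
    fix i l assume "i < dim_row (Vm * D * Vt)" "l < dim_col (Vm * D * Vt)"
    hence il: "i < n" "l < n" using c by auto
    have VD: "(Vm * D) $$ (i,k) = v k $ i * lam k" if k: "k < n" for k
    proof -
      have "(Vm * D) $$ (i,k) = (\<Sum>m<n. v m $ i * (if m = k then lam m else 0))"
        using il k c by (simp add: mm_index[of _ n n] Vm_def D_def scalar_prod_def lessThan_atLeast0)
      also have "\<dots> = (\<Sum>m<n. if m = k then v m $ i * lam m else 0)" by (intro sum.cong refl) auto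
      also have "\<dots> = v k $ i * lam k" using k by simp
      finally show ?thesis .
    qed
    have "(Vm * D * Vt) $$ (i,l) = (\<Sum>k<n. (Vm * D) $$ (i,k) * Vt $$ (k,l))"
      using il c by (intro mm_index[of _ n n]) auto
    also have "\<dots> = (\<Sum>k<n. lam k * v k $ i * v k $ l)"
      using il by (intro sum.cong refl) (simp add: VD Vt_def)
    also have "\<dots> = (\<Sum>k<n. (A *\<^sub>v v k) $ i * v k $ l)"
    proof (intro sum.cong refl)
      fix k assume "k \<in> {..<n}"
      hence k: "k < n" by simp
      have "dim_vec (v k) = n" using vc[OF k] by simp
      thus "lam k * v k $ i * v k $ l = (A *\<^sub>v v k) $ i * v k $ l" using ev k il by simp
    qed
    also have "\<dots> = (\<Sum>k<n. (\<Sum>m<n. A $$ (i,m) * v k $ m) * v k $ l)"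
    proof (intro sum.cong refl)
      fix k assume "k \<in> {..<n}"
      hence k: "k < n" by simp
      show "(A *\<^sub>v v k) $ i * v k $ l = (\<Sum>m<n. A $$ (i,m) * v k $ m) * v k $ l"
        using mv_index[OF A vc[OF k] il(1)] by simp
    qed
    also have "\<dots> = (\<Sum>k<n. \<Sum>m<n. A $$ (i,m) * (v k $ m * v k $ l))"
      by (simp add: sum_distrib_right sum_distrib_left mult_ac)
    also have "\<dots> = (\<Sum>m<n. \<Sum>k<n. A $$ (i,m) * (v k $ m * v k $ l))" by (rule sum.swap)
    also have "\<dots> = (\<Sum>m<n. A $$ (i,m) * (\<Sum>k<n. v k $ m * v k $ l))"
      by (simp add: sum_distrib_left)
    also have "\<dots> = (\<Sum>m<n. A $$ (i,m) * (if m = l then 1 else 0))"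
      using il by (intro sum.cong refl) (simp add: ortho_full_sum[OF o])
    also have "\<dots> = A $$ (i,l)" using il by (simp add: if_distrib cong: if_cong)
    finally show "A $$ (i,l) = (Vm * D * Vt) $$ (i,l)" by simp
  qed (use c A in auto)
  have sim: "similar_mat A D"
    unfolding similar_mat_def similar_mat_wit_def using A c 1 2 3
    by (intro exI[of _ Vm] exI[of _ Vt]) (auto simp: Let_def)
  have ut: "upper_triangular D" unfolding D_def upper_triangular_def by auto
  have "char_poly A = char_poly D" by (rule char_poly_similar[OF sim])
  also have "\<dots> = (\<Prod>a\<leftarrow>diag_mat D. [:- a, 1:])" by (rule char_poly_upper_triangular[OF c(3) ut])
  also have "diag_mat D = map lam [0..<n]" unfolding diag_mat_def D_def by (intro map_cong) auto
  finally show ?thesis .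
qed

lemma lin_prod_mset:
  fixes A B :: "real multiset"
  shows "prod_mset (image_mset (\<lambda>x. [:- x, 1:]) A) = prod_mset (image_mset (\<lambda>x. [:- x, 1:]) B) \<Longrightarrow> A = B"
proof (induction A arbitrary: B)
  case empty
  show ?case
  proof (rule ccontr)
    assume "{#} \<noteq> B"
    then obtain y where y: "y \<in># B" by (metis multiset_nonemptyE)
    have "poly (prod_mset (image_mset (\<lambda>x. [:- x, 1:]) B)) y = 0"
      using y by (auto simp: poly_prod_mset prod_mset_zero_iff)
    thus False using empty by simp
  qed
next
  case (add x A)
  have "poly (prod_mset (image_mset (\<lambda>x. [:- x, 1:]) (add_mset x A))) x = 0"
    by (simp add: poly_prod_mset)
  moreover have "poly (prod_mset (image_mset (\<lambda>x. [:- x, 1:]) B)) x = poly (prod_mset (image_mset (\<lambda>x. [:- x, 1:]) (add_mset x A))) x"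
    by (rule arg_cong[where f="\<lambda>p. poly p x", OF add.prems[symmetric]])
  ultimately have "poly (prod_mset (image_mset (\<lambda>x. [:- x, 1:]) B)) x = 0" by simp
  hence xB: "x \<in># B" by (auto simp: poly_prod_mset prod_mset_zero_iff)
  define B' where "B' = B - {#x#}"
  have BB: "B = add_mset x B'" unfolding B'_def using xB by simp
  have "[:- x, 1:] * prod_mset (image_mset (\<lambda>x. [:- x, 1:]) A) = [:- x, 1:] * prod_mset (image_mset (\<lambda>x. [:- x, 1:]) B')"
    using add.prems unfolding BB by simp
  hence "prod_mset (image_mset (\<lambda>x. [:- x, 1:]) A) = prod_mset (image_mset (\<lambda>x. [:- x, 1:]) B')"
    by (subst (asm) mult_left_cancel) auto
  hence "A = B'" by (rule add.IH)
  thus ?case using BB by simp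
qed

lemma prod_list_mset: "(\<Prod>x\<leftarrow>xs. f x) = prod_mset (image_mset f (mset xs))"
  by (simp add: prod_mset_prod_list[symmetric])

lemma eigs_desc_eq:
  assumes cp: "char_poly A = (\<Prod>x\<leftarrow>ys. [:- x, 1:])"
  shows "eigs_desc A = rev (sort ys)"
proof -
  define P where "P = (\<lambda>xs. sorted_wrt (\<ge>) xs \<and> char_poly A = (\<Prod>x\<leftarrow>xs. [:- x, 1:]))"
  have "P (rev (sort ys))" unfolding P_def cp
    by (auto simp: sorted_wrt_rev prod_list_mset sorted_sort)
  hence "P (eigs_desc A)" unfolding eigs_desc_def P_def[symmetric] by (rule someI)
  hence s: "sorted_wrt (\<ge>) (eigs_desc A)" and c: "(\<Prod>x\<leftarrow>eigs_desc A. [:- x, 1:]) = (\<Prod>x\<leftarrow>ys. [:- x, 1:])"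
    unfolding P_def cp by auto
  have m: "mset (eigs_desc A) = mset ys" using c unfolding prod_list_mset by (rule lin_prod_mset)
  have "sort ys = rev (eigs_desc A)"
    by (rule properties_for_sort) (use m s in \<open>auto simp: sorted_wrt_rev\<close>)
  thus ?thesis by simp
qed

theorem spectral:
  fixes A :: "real mat"
  assumes A: "A \<in> carrier_mat n n" and sym: "\<And>i l. i < n \<Longrightarrow> l < n \<Longrightarrow> A $$ (i,l) = A $$ (l,i)"
  shows "\<exists>v. ortho n n v \<and> (\<forall>k<n. A *\<^sub>v v k = eigs_desc A ! k \<cdot>\<^sub>v v k) \<and>
           length (eigs_desc A) = n \<and> sorted_wrt (\<ge>) (eigs_desc A)"
proof -
  obtain v lam where o: "ortho n n v" and ev: "\<forall>k<n. A *\<^sub>v v k = lam k \<cdot>\<^sub>v v k"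
    using spec_partial[OF A sym, of n] by auto
  define ys where "ys = map lam [0..<n]"
  have e: "eigs_desc A = rev (sort ys)"
    by (rule eigs_desc_eq) (use char_poly_spec[OF A o ev] in \<open>simp add: ys_def\<close>)
  have m: "mset (eigs_desc A) = mset ys" unfolding e by simp
  obtain p where p: "p permutes {..<length ys}" "permute_list p ys = eigs_desc A"
    using mset_eq_permutation[OF m] by blast
  have len: "length (eigs_desc A) = n" using m ys_def by (metis length_map length_upt minus_nat.diff_0 size_mset)
  have pp: "p permutes {..<n}" using p(1) unfolding ys_def by simp
  have pn: "\<And>k. k < n \<Longrightarrow> p k < n" by (metis lessThan_iff permutes_in_image[OF pp])
  have pinj: "\<And>k l. k < n \<Longrightarrow> l < n \<Longrightarrow> p k = p l \<Longrightarrow> k = l"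
    using p(1) unfolding ys_def by (metis permutes_inj injD)
  have ek: "\<And>k. k < n \<Longrightarrow> eigs_desc A ! k = lam (p k)"
    using p(2)[symmetric] pn unfolding ys_def by (simp add: permute_list_def)
  have o': "ortho n n (v \<circ> p)"
    using o pn pinj unfolding ortho_def by auto
  have ev': "\<forall>k<n. A *\<^sub>v (v \<circ> p) k = eigs_desc A ! k \<cdot>\<^sub>v (v \<circ> p) k"
    using ev pn ek by simp
  have "sorted_wrt (\<ge>) (eigs_desc A)" unfolding e by (simp add: sorted_wrt_rev sorted_sort)
  thus ?thesis using o' ev' len by blast
qed



lemma pm_sym: "i < n \<Longrightarrow> l < n \<Longrightarrow> pm n k b $$ (i,l) = pm n k b $$ (l,i)"
  by (simp add: pm_index mult.commute)

lemma pm_dot: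
  assumes o: "ortho n k b" and x: "x \<in> carrier_vec n"
  shows "x \<bullet> (pm n k b *\<^sub>v x) = (\<Sum>j<k. (x \<bullet> b j)^2)"
proof -
  have "x \<bullet> (pm n k b *\<^sub>v x) = x \<bullet> pr n k b x" using pm_mult[OF o x] by simp
  also have "\<dots> = (\<Sum>j<k. (x \<bullet> b j) * (x \<bullet> b j))" unfolding pr_def
    using o x by (intro dot_lc) (auto simp: ortho_def)
  finally show ?thesis by (simp add: power2_eq_square)
qed

lemma pm_fix:
  assumes o: "ortho n k b" and y: "y \<in> spn n k b"
  shows "pm n k b *\<^sub>v y = y"
proof -
  have "y \<in> carrier_vec n" using y unfolding spn_def by auto
  thus ?thesis using pm_mult[OF o] pr_id[OF o y] by simp
qed

lemma pm_full_in:
  assumes o: "ortho n k b" and x: "x \<in> carrier_vec n" and e: "x \<bullet> (pm n k b *\<^sub>v x) = x \<bullet> x"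
  shows "x \<in> spn n k b"
proof -
  have "(x - pr n k b x) \<bullet> (x - pr n k b x) = 0" using pythag[OF o x] e pm_dot[OF o x] by simp
  hence "x - pr n k b x = 0\<^sub>v n" using self_dot_zero[of _ n] x by simp
  moreover have "x = (x - pr n k b x) + pr n k b x" using x by (intro eq_vecI) auto
  ultimately have "x = pr n k b x" by simp
  thus ?thesis using pr_in_spn by metis
qed

lemma quad_expand:
  assumes o: "ortho n n v" and A: "A \<in> carrier_mat n n"
    and sym: "\<And>i l. i < n \<Longrightarrow> l < n \<Longrightarrow> A $$ (i,l) = A $$ (l,i)"
    and ev: "\<forall>k<n. A *\<^sub>v v k = e k \<cdot>\<^sub>v v k" and x: "x \<in> carrier_vec n"
  shows "x \<bullet> (A *\<^sub>v x) = (\<Sum>k<n. e k * (x \<bullet> v k)^2)"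
proof -
  have vc: "\<And>k. k < n \<Longrightarrow> v k \<in> carrier_vec n" using o by (simp add: ortho_def)
  have Ax: "A *\<^sub>v x \<in> spn n n v" using ortho_full_spn[OF o] A x by simp
  have "x \<bullet> (A *\<^sub>v x) = (\<Sum>k<n. (x \<bullet> v k) * ((A *\<^sub>v x) \<bullet> v k))" by (rule parseval2[OF o x Ax])
  also have "\<dots> = (\<Sum>k<n. e k * (x \<bullet> v k)^2)"
  proof (intro sum.cong refl)
    fix k assume "k \<in> {..<n}" hence k: "k < n" by simp
    have "(A *\<^sub>v x) \<bullet> v k = x \<bullet> (A *\<^sub>v v k)" using sym_dot[OF A sym x vc[OF k]] by simp
    also have "\<dots> = e k * (x \<bullet> v k)" using ev k x vc[OF k] by simp
    finally show "(x \<bullet> v k) * ((A *\<^sub>v x) \<bullet> v k) = e k * (x \<bullet> v k)^2" by (simp add: power2_eq_square)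
  qed
  finally show ?thesis .
qed

lemma kyfan:
  fixes A :: "real mat"
  assumes A: "A \<in> carrier_mat n n" and sym: "\<And>i l. i < n \<Longrightarrow> l < n \<Longrightarrow> A $$ (i,l) = A $$ (l,i)"
    and o: "ortho n n v" and ev: "\<forall>k<n. A *\<^sub>v v k = es ! k \<cdot>\<^sub>v v k"
    and srt: "sorted_wrt (\<ge>) es" and len: "length es = n" and ow: "ortho n m w"
  shows "(\<Sum>j<m. w j \<bullet> (A *\<^sub>v w j)) \<le> (\<Sum>k<m. es ! k)"
proof -
  have mn: "m \<le> n" using ortho_le[OF ow] .
  have vc: "\<And>k. k < n \<Longrightarrow> v k \<in> carrier_vec n" using o by (simp add: ortho_def)
  have wc: "\<And>j. j < m \<Longrightarrow> w j \<in> carrier_vec n" using ow by (simp add: ortho_def)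
  define c where "c = (\<lambda>k. \<Sum>j<m. (w j \<bullet> v k)^2)"
  have c1: "c k \<le> 1" if k: "k < n" for k
  proof -
    have "c k = (\<Sum>j<m. (v k \<bullet> w j)^2)" unfolding c_def
      using vc[OF k] wc by (intro sum.cong refl) (simp add: comm_scalar_prod[of _ n])
    also have "\<dots> \<le> v k \<bullet> v k" by (rule bessel[OF ow vc[OF k]])
    also have "\<dots> = 1" using o k by (simp add: ortho_def)
    finally show ?thesis .
  qed
  have c0: "c k \<ge> 0" for k unfolding c_def by (intro sum_nonneg) auto
  have csum: "(\<Sum>k<n. c k) = m"
  proof -
    have "(\<Sum>k<n. c k) = (\<Sum>j<m. \<Sum>k<n. (w j \<bullet> v k)^2)" unfolding c_def by (rule sum.swap)
    also have "\<dots> = (\<Sum>j<m. w j \<bullet> w j)"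
      using parseval[OF o] ortho_full_spn[OF o] wc by (intro sum.cong refl) auto
    also have "\<dots> = m" using ow by (simp add: ortho_def)
    finally show ?thesis .
  qed
  have "(\<Sum>j<m. w j \<bullet> (A *\<^sub>v w j)) = (\<Sum>j<m. \<Sum>k<n. es ! k * (w j \<bullet> v k)^2)"
    using quad_expand[OF o A sym ev] wc by (intro sum.cong refl) auto
  also have "\<dots> = (\<Sum>k<n. es ! k * c k)" unfolding c_def
    by (subst sum.swap) (simp add: sum_distrib_left)
  also have "\<dots> \<le> (\<Sum>k<m. es ! k)"
  proof (cases m)
    case 0
    hence "c k = 0" for k unfolding c_def by simp
    thus ?thesis using 0 by simp
  next
    case (Suc m')
    define L where "L = es ! m'"
    have ge: "es ! k \<ge> L" if "k < m" for k
    proof (cases "k = m'")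
      case True thus ?thesis unfolding L_def by simp
    next
      case False hence "k < m'" using that Suc by simp
      thus ?thesis unfolding L_def using sorted_wrt_nth_less[OF srt, of k m'] len mn Suc by simp
    qed
    have le: "es ! k \<le> L" if "m \<le> k" "k < n" for k
    proof (cases "k = m'")
      case True thus ?thesis unfolding L_def by simp
    next
      case False hence "m' < k" using that Suc by simp
      thus ?thesis unfolding L_def using sorted_wrt_nth_less[OF srt, of m' k] len that by simp
    qed
    have "(\<Sum>k<n. es ! k * c k) \<le> (\<Sum>k<n. L * c k + (if k < m then es ! k - L else 0))"
    proof (intro sum_mono)
      fix k assume "k \<in> {..<n}" hence k: "k < n" by simp
      show "es ! k * c k \<le> L * c k + (if k < m then es ! k - L else 0)"
      proof (cases "k < m")
        case True
        have "(es ! k - L) * (c k - 1) \<le> 0" using ge[OF True] c1[OF k]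
          by (intro mult_nonneg_nonpos) auto
        thus ?thesis using True by (simp add: algebra_simps)
      next
        case False
        have "(L - es ! k) * c k \<ge> 0" using le[of k] False k c0[of k] by simp
        thus ?thesis using False by (simp add: algebra_simps)
      qed
    qed
    also have "\<dots> = L * (\<Sum>k<n. c k) + (\<Sum>k<n. if k < m then es ! k - L else 0)"
      by (simp add: sum.distrib sum_distrib_left)
    also have "(\<Sum>k<n. if k < m then es ! k - L else 0) = (\<Sum>k<m. es ! k - L)"
    proof -
      have "{..<n} \<inter> {k. k < m} = {..<m}" using mn by auto
      thus ?thesis by (simp add: sum.If_cases)
    qed
    also have "L * (\<Sum>k<n. c k) + (\<Sum>k<m. es ! k - L) = (\<Sum>k<m. es ! k)"
      using csum by (simp add: sum_subtractf)
    finally show ?thesis .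
  qed
  finally show ?thesis .
qed



lemma lc_shift:
  "lc n (Suc p) z c = c 0 \<cdot>\<^sub>v z 0 + lc n p (\<lambda>a. z (Suc a)) (\<lambda>a. c (Suc a))" if "z 0 \<in> carrier_vec n"
  using that by (intro eq_vecI) (auto simp del: sum.lessThan_Suc simp add: sum.lessThan_Suc_shift)

lemma indep_grow:
  assumes "ortho n k b" "\<forall>a<p. z a \<in> carrier_vec n" "\<forall>c. lc n p z c \<in> spn n k b \<longrightarrow> (\<forall>a<p. c a = 0)"
  shows "\<exists>F. ortho n (k + p) F \<and> (\<forall>j<k. F j = b j)"
  using assms
proof (induction p arbitrary: k b z)
  case 0 thus ?case by (intro exI[of _ b]) auto
next
  case (Suc p)
  note o = Suc.prems(1)
  have zc: "\<And>a. a < Suc p \<Longrightarrow> z a \<in> carrier_vec n" using Suc.prems(2) by auto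
  have bc: "\<And>j. j < k \<Longrightarrow> b j \<in> carrier_vec n" using o by (simp add: ortho_def)
  define z0 where "z0 = z 0"
  have z0c: "z0 \<in> carrier_vec n" unfolding z0_def using zc by simp
  have nz: "z0 \<notin> spn n k b"
  proof
    assume z0s: "z0 \<in> spn n k b"
    have "lc n (Suc p) z (\<lambda>a. if a = 0 then 1 else 0) = z0"
      unfolding z0_def by (rule lc_unit) (use zc in auto)
    hence "lc n (Suc p) z (\<lambda>a. if a = 0 then 1 else 0) \<in> spn n k b" using z0s by simp
    hence "\<forall>a<Suc p. (if a = 0 then 1 else (0::real)) = 0" using Suc.prems(3) by blast
    hence "(if (0::nat) = 0 then 1 else (0::real)) = 0" by blast
    thus False by simp
  qed
  define r where "r = z0 - pr n k b z0"
  define s where "s = sqrt (r \<bullet> r)"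
  define b' where "b' = b(k := (1 / s) \<cdot>\<^sub>v r)"
  have o': "ortho n (Suc k) b'" using ortho_extend(1)[OF o z0c nz] unfolding b'_def s_def r_def .
  have rc: "r \<in> carrier_vec n" unfolding r_def using z0c by simp
  define z' where "z' = (\<lambda>a. z (Suc a))"
  have z'c: "\<forall>a<p. z' a \<in> carrier_vec n" unfolding z'_def using zc by auto
  have H': "\<forall>c. lc n p z' c \<in> spn n (Suc k) b' \<longrightarrow> (\<forall>a<p. c a = 0)"
  proof (rule allI, rule impI)
    fix c assume "lc n p z' c \<in> spn n (Suc k) b'"
    then obtain e where e: "lc n p z' c = lc n (Suc k) b' e" unfolding spn_def by auto
    define c'' where "c'' = (\<lambda>a. if a = 0 then - (e k / s) else c (a - 1))"
    have "lc n (Suc p) z c'' = lc n k b (\<lambda>j. e j - (e k / s) * (z0 \<bullet> b j))"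
    proof (rule eq_vecI)
      fix i assume "i < dim_vec (lc n k b (\<lambda>j. e j - (e k / s) * (z0 \<bullet> b j)))"
      hence i: "i < n" by simp
      have "lc n (Suc p) z c'' = c'' 0 \<cdot>\<^sub>v z 0 + lc n p z' (\<lambda>a. c'' (Suc a))"
        unfolding z'_def by (rule lc_shift) (use zc in auto)
      also have "(\<lambda>a. c'' (Suc a)) = c" unfolding c''_def by auto
      finally have "lc n (Suc p) z c'' $ i = - (e k / s) * z0 $ i + lc n (Suc k) b' e $ i"
        using i e z0c unfolding c''_def z0_def by simp
      also have "lc n (Suc k) b' e $ i = (\<Sum>j<k. e j * b j $ i) + e k * ((1 / s) * r $ i)"
        using i rc unfolding b'_def by simp
      also have "r $ i = z0 $ i - (\<Sum>j<k. (z0 \<bullet> b j) * b j $ i)"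
        unfolding r_def pr_def using i z0c by simp
      finally have A: "lc n (Suc p) z c'' $ i = - (e k / s) * z0 $ i + ((\<Sum>j<k. e j * b j $ i) + e k * ((1 / s) * (z0 $ i - (\<Sum>j<k. (z0 \<bullet> b j) * b j $ i))))" .
      have B: "lc n k b (\<lambda>j. e j - (e k / s) * (z0 \<bullet> b j)) $ i = (\<Sum>j<k. e j * b j $ i) - (e k / s) * (\<Sum>j<k. (z0 \<bullet> b j) * b j $ i)"
        using i by (simp add: left_diff_distrib sum_subtractf sum_distrib_left mult.assoc)
      show "lc n (Suc p) z c'' $ i = lc n k b (\<lambda>j. e j - (e k / s) * (z0 \<bullet> b j)) $ i"
        unfolding A B by (simp add: algebra_simps)
    qed simp
    hence "lc n (Suc p) z c'' \<in> spn n k b" unfolding spn_def by simp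
    hence "\<forall>a<Suc p. c'' a = 0" using Suc.prems(3) by blast
    show "\<forall>a<p. c a = 0"
    proof (intro allI impI)
      fix a assume "a < p"
      hence "c'' (Suc a) = 0" using `\<forall>a<Suc p. c'' a = 0` by simp
      thus "c a = 0" unfolding c''_def by simp
    qed
  qed
  obtain F where F: "ortho n (Suc k + p) F" "\<forall>j<Suc k. F j = b' j"
    using Suc.IH[OF o' z'c H'] by blast
  thus ?case unfolding b'_def by (intro exI[of _ F]) auto
qed



lemma pr_add: "ortho n k b \<Longrightarrow> x \<in> carrier_vec n \<Longrightarrow> y \<in> carrier_vec n \<Longrightarrow> pr n k b (x + y) = pr n k b x + pr n k b y"
  unfolding pr_def lc_add by (intro lc_cong refl) (auto simp: ortho_def add_scalar_prod_distrib[of _ n])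

lemma pr_smult: "ortho n k b \<Longrightarrow> x \<in> carrier_vec n \<Longrightarrow> pr n k b (a \<cdot>\<^sub>v x) = a \<cdot>\<^sub>v pr n k b x"
  unfolding pr_def lc_smult by (intro lc_cong refl) (auto simp: ortho_def)

lemma pr_sym:
  assumes o: "ortho n k b" and x: "x \<in> carrier_vec n" and y: "y \<in> carrier_vec n"
  shows "x \<bullet> pr n k b y = pr n k b x \<bullet> y"
proof -
  have bc: "\<And>j. j < k \<Longrightarrow> b j \<in> carrier_vec n" using o by (simp add: ortho_def)
  have "x \<bullet> pr n k b y = (\<Sum>j<k. (y \<bullet> b j) * (x \<bullet> b j))" unfolding pr_def using bc x by (rule dot_lc)
  also have "\<dots> = (\<Sum>j<k. (x \<bullet> b j) * (b j \<bullet> y))"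
    using bc y by (intro sum.cong refl) (simp add: comm_scalar_prod[of _ n])
  also have "\<dots> = pr n k b x \<bullet> y" unfolding pr_def using bc y by (rule lc_dot[symmetric])
  finally show ?thesis .
qed

lemma pr_self: "ortho n k b \<Longrightarrow> x \<in> carrier_vec n \<Longrightarrow> x \<bullet> pr n k b x = (\<Sum>j<k. (x \<bullet> b j)^2)"
  unfolding pr_def by (subst dot_lc) (auto simp: ortho_def power2_eq_square)

lemma pr_pr: "ortho n k b \<Longrightarrow> pr n k b (pr n k b x) = pr n k b x"
  using pr_id pr_in_spn by blast

lemma diff_sq: "(x :: real vec) \<in> carrier_vec n \<Longrightarrow> y \<in> carrier_vec n \<Longrightarrow> (x - y) \<bullet> (x - y) = x \<bullet> x - 2 * (x \<bullet> y) + y \<bullet> y"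
  by (simp add: minus_scalar_prod_distrib[of _ n] scalar_prod_minus_distrib[of _ n] comm_scalar_prod[of y n x])

locale twoproj =
  fixes n k1 k2 m :: nat and b1 b2 w :: "nat \<Rightarrow> real vec"
  assumes ob1: "ortho n k1 b1" and ob2: "ortho n k2 b2" and ow: "ortho n m w"
    and wb1: "\<forall>j<m. b1 j = w j" and wb2: "\<forall>j<m. b2 j = w j"
    and Wint: "spn n k1 b1 \<inter> spn n k2 b2 \<subseteq> spn n m w"
    and mk1: "m \<le> k1" and mk2: "m \<le> k2"
begin

abbreviation "M \<equiv> pm n k1 b1 + pm n k2 b2"

lemma Mc: "M \<in> carrier_mat n n" by simp

lemma Msym: "i < n \<Longrightarrow> l < n \<Longrightarrow> M $$ (i,l) = M $$ (l,i)"
  using pm_sym[of i n l k1 b1] pm_sym[of i n l k2 b2] by (simp add: pm_def)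

lemma Mmult: "x \<in> carrier_vec n \<Longrightarrow> M *\<^sub>v x = pr n k1 b1 x + pr n k2 b2 x"
  by (simp add: add_mult_distrib_mat_vec[of _ n n] pm_mult[OF ob1] pm_mult[OF ob2])

lemma W1: "spn n m w \<subseteq> spn n k1 b1" using wb1 mk1 by (intro spn_mono) auto
lemma W2: "spn n m w \<subseteq> spn n k2 b2" using wb2 mk2 by (intro spn_mono) auto

lemma MW: "y \<in> spn n m w \<Longrightarrow> M *\<^sub>v y = 2 \<cdot>\<^sub>v y"
proof -
  assume y: "y \<in> spn n m w"
  have yc: "y \<in> carrier_vec n" using y unfolding spn_def by auto
  have "pr n k1 b1 y = y" using pr_id[OF ob1] W1 y by auto
  moreover have "pr n k2 b2 y = y" using pr_id[OF ob2] W2 y by auto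
  ultimately show ?thesis using Mmult[OF yc] yc by (intro eq_vecI) auto
qed

lemma orth_W: "x \<in> carrier_vec n \<Longrightarrow> \<forall>j<m. x \<bullet> w j = 0 \<Longrightarrow> y \<in> spn n m w \<Longrightarrow> x \<bullet> y = 0"
  unfolding spn_def using ow by (auto simp: dot_lc ortho_def)

lemma d_le_n: "k1 + k2 - m \<le> n"
proof -
  define z where "z = (\<lambda>a. b2 (m + a))"
  have zc: "\<forall>a<k2 - m. z a \<in> carrier_vec n" using ob2 unfolding z_def ortho_def by auto
  have H: "\<forall>c. lc n (k2 - m) z c \<in> spn n k1 b1 \<longrightarrow> (\<forall>a<k2 - m. c a = 0)"
  proof (rule allI, rule impI)
    fix c assume yin: "lc n (k2 - m) z c \<in> spn n k1 b1"
    define c' where "c' = (\<lambda>j. if j < m then 0 else c (j - m))"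
    have ye: "lc n (k2 - m) z c = lc n k2 b2 c'"
    proof (rule eq_vecI)
      fix i assume "i < dim_vec (lc n k2 b2 c')" hence i: "i < n" by simp
      have "(\<Sum>j<k2. c' j * b2 j $ i) = (\<Sum>j<k2. if j < m then 0 else c (j - m) * b2 (m + (j - m)) $ i)"
        unfolding c'_def by (intro sum.cong refl) auto
      also have "\<dots> = (\<Sum>a<k2 - m. c a * b2 (m + a) $ i)" by (rule shift_sum[OF mk2])
      finally show "lc n (k2 - m) z c $ i = lc n k2 b2 c' $ i" using i unfolding z_def by simp
    qed simp
    define y where "y = lc n k2 b2 c'"
    have yW: "y \<in> spn n m w" using Wint yin ye unfolding y_def spn_def by auto
    have yb: "\<And>j. j < k2 \<Longrightarrow> b2 j \<bullet> y = c' j" unfolding y_def using ortho_dot_lc[OF ob2] by simp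
    have yw: "\<forall>j<m. y \<bullet> w j = 0"
    proof (intro allI impI)
      fix j assume j: "j < m"
      have "y \<bullet> w j = w j \<bullet> y" using ow j unfolding y_def by (simp add: comm_scalar_prod[of _ n] ortho_def)
      also have "\<dots> = b2 j \<bullet> y" using wb2 j by simp
      also have "\<dots> = 0" using yb[of j] j mk2 unfolding c'_def by simp
      finally show "y \<bullet> w j = 0" .
    qed
    have "y \<bullet> y = 0" using parseval[OF ow yW] yw by simp
    hence y0: "y = 0\<^sub>v n" using self_dot_zero[of y n] unfolding y_def by simp
    show "\<forall>a<k2 - m. c a = 0"
    proof (intro allI impI)
      fix a assume a: "a < k2 - m"
      have "b2 (m + a) \<bullet> y = c' (m + a)" using yb[of "m + a"] a by simp
      moreover have "b2 (m + a) \<bullet> y = 0" using y0 ob2 a unfolding ortho_def by simp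
      ultimately show "c a = 0" unfolding c'_def by simp
    qed
  qed
  obtain F where "ortho n (k1 + (k2 - m)) F" using indep_grow[OF ob1 zc H] by blast
  thus ?thesis using ortho_le mk2 by fastforce
qed

lemma upper_family:
  "\<exists>L F. ortho n L F \<and> L \<le> k1 + k2 - m \<and> spn n k1 b1 \<subseteq> spn n L F \<and> spn n k2 b2 \<subseteq> spn n L F"
proof -
  define xs where "xs = map (\<lambda>a. b2 (m + a)) [0..<k2 - m]"
  have xs: "set xs \<subseteq> carrier_vec n" using ob2 unfolding xs_def ortho_def by auto
  obtain L F where h: "k1 \<le> L" "L \<le> k1 + length xs" "ortho n L F" "\<forall>j<k1. F j = b1 j" "set xs \<subseteq> spn n L F"
    using gs_ext[OF ob1 xs] by blast
  have s1: "spn n k1 b1 \<subseteq> spn n L F" using h by (intro spn_mono) auto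
  have s2: "spn n k2 b2 \<subseteq> spn n L F"
  proof (rule spn_sub[OF closedV_spn])
    fix j assume j: "j < k2"
    show "b2 j \<in> spn n L F"
    proof (cases "j < m")
      case True
      hence "b2 j = b1 j" using wb1 wb2 by simp
      moreover have "b1 j \<in> spn n k1 b1" using ortho_in_spn[OF ob1] True mk1 by simp
      ultimately show ?thesis using s1 by auto
    next
      case False
      hence "b2 j \<in> set xs" unfolding xs_def using j by (auto intro!: image_eqI[of _ _ "j - m"])
      thus ?thesis using h by auto
    qed
  qed
  show ?thesis using h s1 s2 mk2 unfolding xs_def by (intro exI[of _ L] exI[of _ F]) auto
qed

context
  fixes v :: "nat \<Rightarrow> real vec" and es :: "real list"
  assumes ov: "ortho n n v" and evM: "\<forall>k<n. M *\<^sub>v v k = es ! k \<cdot>\<^sub>v v k"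
    and srt: "sorted_wrt (\<ge>) es" and len: "length es = n"
begin

lemma vc: "k < n \<Longrightarrow> v k \<in> carrier_vec n" using ov by (simp add: ortho_def)

lemma es_quad: "k < n \<Longrightarrow> es ! k = (\<Sum>j<k1. (v k \<bullet> b1 j)^2) + (\<Sum>j<k2. (v k \<bullet> b2 j)^2)"
proof -
  assume k: "k < n"
  have "v k \<bullet> (M *\<^sub>v v k) = es ! k" using evM k vc[OF k] ov by (simp add: ortho_def)
  moreover have "v k \<bullet> (M *\<^sub>v v k) = v k \<bullet> pr n k1 b1 (v k) + v k \<bullet> pr n k2 b2 (v k)"
    using Mmult[OF vc[OF k]] vc[OF k] by (simp add: scalar_prod_add_distrib[of _ n])
  ultimately show ?thesis using pr_self[OF ob1 vc[OF k]] pr_self[OF ob2 vc[OF k]] by simp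
qed

lemma es_range: "k < n \<Longrightarrow> 0 \<le> es ! k \<and> es ! k \<le> 2"
proof -
  assume k: "k < n"
  have 1: "(\<Sum>j<k1. (v k \<bullet> b1 j)^2) \<le> 1" using bessel[OF ob1 vc[OF k]] ov k by (simp add: ortho_def)
  have 2: "(\<Sum>j<k2. (v k \<bullet> b2 j)^2) \<le> 1" using bessel[OF ob2 vc[OF k]] ov k by (simp add: ortho_def)
  have "(\<Sum>j<k1. (v k \<bullet> b1 j)^2) \<ge> 0" "(\<Sum>j<k2. (v k \<bullet> b2 j)^2) \<ge> 0" by (auto intro: sum_nonneg)
  thus ?thesis using 1 2 es_quad[OF k] by simp
qed

lemma es_two: "k < n \<Longrightarrow> es ! k = 2 \<Longrightarrow> v k \<in> spn n m w"
proof -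
  assume k: "k < n" and e2: "es ! k = 2"
  have vv: "v k \<bullet> v k = 1" using ov k by (simp add: ortho_def)
  have 1: "(\<Sum>j<k1. (v k \<bullet> b1 j)^2) \<le> 1" using bessel[OF ob1 vc[OF k]] vv by simp
  have 2: "(\<Sum>j<k2. (v k \<bullet> b2 j)^2) \<le> 1" using bessel[OF ob2 vc[OF k]] vv by simp
  have a1: "(\<Sum>j<k1. (v k \<bullet> b1 j)^2) = 1" and a2: "(\<Sum>j<k2. (v k \<bullet> b2 j)^2) = 1"
    using 1 2 es_quad[OF k] e2 by auto
  have "v k \<in> spn n k1 b1"
    by (rule pm_full_in[OF ob1 vc[OF k]]) (use a1 vv pm_dot[OF ob1 vc[OF k]] in simp)
  moreover have "v k \<in> spn n k2 b2"
    by (rule pm_full_in[OF ob2 vc[OF k]]) (use a2 vv pm_dot[OF ob2 vc[OF k]] in simp)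
  ultimately show ?thesis using Wint by auto
qed

lemma es_zero: "k < n \<Longrightarrow> k1 + k2 - m \<le> k \<Longrightarrow> es ! k = 0"
proof (rule ccontr)
  assume k: "k < n" and dk: "k1 + k2 - m \<le> k" and ne: "es ! k \<noteq> 0"
  define d where "d = k1 + k2 - m"
  have pos: "es ! k > 0" using es_range[OF k] ne by simp
  obtain L F where h: "ortho n L F" "L \<le> d" "spn n k1 b1 \<subseteq> spn n L F" "spn n k2 b2 \<subseteq> spn n L F"
    using upper_family unfolding d_def by blast
  have Fc: "\<And>l. l < L \<Longrightarrow> F l \<in> carrier_vec n" using h(1) by (simp add: ortho_def)
  have vin: "v i \<in> spn n L F" if i: "i < Suc d" for i
  proof -
    have iK: "i \<le> k" using i dk unfolding d_def by simp
    hence ik: "i < n" using k by simp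
    have "es ! i \<ge> es ! k"
    proof (cases "i = k")
      case False thus ?thesis using sorted_wrt_nth_less[OF srt, of i k] iK k len by simp
    qed simp
    hence ei: "es ! i > 0" using pos by simp
    have "v i = (1 / es ! i) \<cdot>\<^sub>v (M *\<^sub>v v i)" using evM ik ei vc[OF ik] by (simp add: smult_smult_assoc)
    also have "\<dots> = (1 / es ! i) \<cdot>\<^sub>v (pr n k1 b1 (v i) + pr n k2 b2 (v i))" using Mmult[OF vc[OF ik]] by simp
    also have "\<dots> \<in> spn n L F"
    proof -
      have "pr n k1 b1 (v i) \<in> spn n L F" using h(3) pr_in_spn by blast
      moreover have "pr n k2 b2 (v i) \<in> spn n L F" using h(4) pr_in_spn by blast
      ultimately show ?thesis using closedV_spn[of n L F] unfolding closedV_def by blast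
    qed
    finally show ?thesis .
  qed
  have dn: "Suc d \<le> n" using k dk unfolding d_def by simp
  have ov': "ortho n (Suc d) v" using ov dn unfolding ortho_def by auto
  have "real (Suc d) = (\<Sum>i<Suc d. v i \<bullet> v i)" using ov' by (simp add: ortho_def)
  also have "\<dots> = (\<Sum>i<Suc d. \<Sum>l<L. (v i \<bullet> F l)^2)"
    by (intro sum.cong refl) (use parseval[OF h(1)] vin in auto)
  also have "\<dots> = (\<Sum>l<L. \<Sum>i<Suc d. (F l \<bullet> v i)^2)"
    by (subst sum.swap) (intro sum.cong refl, use Fc ov' in \<open>auto simp: ortho_def comm_scalar_prod[of _ n]\<close>)
  also have "\<dots> \<le> (\<Sum>l<L. F l \<bullet> F l)" by (intro sum_mono bessel[OF ov']) (use Fc in auto)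
  also have "\<dots> = L" using h(1) by (simp add: ortho_def)
  finally show False using h(2) by simp
qed

lemma es_pair: "k < n \<Longrightarrow> 0 < es ! k \<Longrightarrow> es ! k < 2 \<Longrightarrow> \<exists>l<n. es ! l = 2 - es ! k"
proof -
  assume k: "k < n" and p0: "0 < es ! k" and p2: "es ! k < 2"
  define e where "e = es ! k"
  define x where "x = v k"
  have xc: "x \<in> carrier_vec n" unfolding x_def using vc[OF k] .
  define p1 where "p1 = pr n k1 b1 x"
  define p2 where "p2 = pr n k2 b2 x"
  have p1c: "p1 \<in> carrier_vec n" and p2c: "p2 \<in> carrier_vec n" unfolding p1_def p2_def by auto
  have Mx: "p1 + p2 = e \<cdot>\<^sub>v x" using Mmult[OF xc] evM k unfolding p1_def p2_def e_def x_def by simp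
  have p2e: "p2 = e \<cdot>\<^sub>v x - p1"
  proof (rule eq_vecI)
    fix i assume "i < dim_vec (e \<cdot>\<^sub>v x - p1)" hence i: "i < n" using xc p1c p2c by simp
    have "(p1 + p2) $ i = (e \<cdot>\<^sub>v x) $ i" using Mx by simp
    thus "p2 $ i = (e \<cdot>\<^sub>v x - p1) $ i" using i p1c p2c xc by simp
  qed (use p1c p2c xc in simp)
  have p1e: "p1 = e \<cdot>\<^sub>v x - p2"
  proof (rule eq_vecI)
    fix i assume "i < dim_vec (e \<cdot>\<^sub>v x - p2)" hence i: "i < n" using xc p1c p2c by simp
    have "(p1 + p2) $ i = (e \<cdot>\<^sub>v x) $ i" using Mx by simp
    thus "p1 $ i = (e \<cdot>\<^sub>v x - p2) $ i" using i p1c p2c xc by simp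
  qed (use p1c p2c xc in simp)
  have f1: "pr n k1 b1 p1 = p1" unfolding p1_def using pr_pr[OF ob1] .
  have f2: "pr n k2 b2 p2 = p2" unfolding p2_def using pr_pr[OF ob2] .
  have f3: "pr n k1 b1 p2 = e \<cdot>\<^sub>v p1 - p1"
  proof -
    have "pr n k1 b1 p2 = pr n k1 b1 (e \<cdot>\<^sub>v x + (-1) \<cdot>\<^sub>v p1)"
      using p2e xc p1c by (intro arg_cong[where f="pr n k1 b1"]) (intro eq_vecI, auto)
    also have "\<dots> = e \<cdot>\<^sub>v p1 + (-1) \<cdot>\<^sub>v p1"
      using xc p1c by (simp add: pr_add[OF ob1] pr_smult[OF ob1] f1 p1_def[symmetric])
    also have "\<dots> = e \<cdot>\<^sub>v p1 - p1" using p1c by (intro eq_vecI) auto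
    finally show ?thesis .
  qed
  have f4: "pr n k2 b2 p1 = e \<cdot>\<^sub>v p2 - p2"
  proof -
    have "pr n k2 b2 p1 = pr n k2 b2 (e \<cdot>\<^sub>v x + (-1) \<cdot>\<^sub>v p2)"
      using p1e xc p2c by (intro arg_cong[where f="pr n k2 b2"]) (intro eq_vecI, auto)
    also have "\<dots> = e \<cdot>\<^sub>v p2 + (-1) \<cdot>\<^sub>v p2"
      using xc p2c by (simp add: pr_add[OF ob2] pr_smult[OF ob2] f2 p2_def[symmetric])
    also have "\<dots> = e \<cdot>\<^sub>v p2 - p2" using p2c by (intro eq_vecI) auto
    finally show ?thesis .
  qed
  define y where "y = p1 - p2"
  have yc: "y \<in> carrier_vec n" unfolding y_def using p1c p2c by simp
  have My: "M *\<^sub>v y = (2 - e) \<cdot>\<^sub>v y"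
  proof -
    have "M *\<^sub>v y = pr n k1 b1 y + pr n k2 b2 y" by (rule Mmult[OF yc])
    also have "pr n k1 b1 y = pr n k1 b1 (p1 + (-1) \<cdot>\<^sub>v p2)"
      unfolding y_def using p1c p2c by (intro arg_cong[where f="pr n k1 b1"]) (intro eq_vecI, auto)
    also have "\<dots> = p1 + (-1) \<cdot>\<^sub>v (e \<cdot>\<^sub>v p1 - p1)" using p1c p2c by (simp add: pr_add[OF ob1] pr_smult[OF ob1] f1 f3)
    also have "pr n k2 b2 y = pr n k2 b2 (p1 + (-1) \<cdot>\<^sub>v p2)"
      unfolding y_def using p1c p2c by (intro arg_cong[where f="pr n k2 b2"]) (intro eq_vecI, auto)
    also have "\<dots> = (e \<cdot>\<^sub>v p2 - p2) + (-1) \<cdot>\<^sub>v p2" using p1c p2c by (simp add: pr_add[OF ob2] pr_smult[OF ob2] f2 f4)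
    finally show ?thesis unfolding y_def using p1c p2c by (intro eq_vecI) (auto simp: algebra_simps)
  qed
  define a where "a = x \<bullet> p1"
  define b where "b = x \<bullet> p2"
  have ab: "a + b = e"
  proof -
    have "a + b = x \<bullet> (p1 + p2)" unfolding a_def b_def using xc p1c p2c by (simp add: scalar_prod_add_distrib[of _ n])
    also have "\<dots> = e * (x \<bullet> x)" using Mx xc by simp
    also have "x \<bullet> x = 1" using ov k unfolding x_def by (simp add: ortho_def)
    finally show ?thesis by simp
  qed
  have p11: "p1 \<bullet> p1 = a"
  proof -
    have "p1 \<bullet> p1 = x \<bullet> pr n k1 b1 p1" unfolding p1_def using pr_sym[OF ob1 xc, of "pr n k1 b1 x"] by simp
    thus ?thesis unfolding a_def using f1 by simp
  qed
  have p22: "p2 \<bullet> p2 = b"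
  proof -
    have "p2 \<bullet> p2 = x \<bullet> pr n k2 b2 p2" unfolding p2_def using pr_sym[OF ob2 xc, of "pr n k2 b2 x"] by simp
    thus ?thesis unfolding b_def using f2 by simp
  qed
  have p12a: "p1 \<bullet> p2 = (e - 1) * a"
  proof -
    have "p1 \<bullet> p2 = x \<bullet> pr n k1 b1 p2" unfolding p1_def using pr_sym[OF ob1 xc p2c] by simp
    also have "\<dots> = x \<bullet> (e \<cdot>\<^sub>v p1 - p1)" using f3 by simp
    also have "\<dots> = e * a - a" unfolding a_def using xc p1c by (simp add: scalar_prod_minus_distrib[of _ n])
    finally show ?thesis by (simp add: algebra_simps)
  qed
  have p12b: "p1 \<bullet> p2 = (e - 1) * b"
  proof -
    have "p1 \<bullet> p2 = p2 \<bullet> p1" using p1c p2c by (simp add: comm_scalar_prod[of _ n])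
    also have "\<dots> = x \<bullet> pr n k2 b2 p1" unfolding p2_def using pr_sym[OF ob2 xc p1c] by simp
    also have "\<dots> = x \<bullet> (e \<cdot>\<^sub>v p2 - p2)" using f4 by simp
    also have "\<dots> = e * b - b" unfolding b_def using xc p2c by (simp add: scalar_prod_minus_distrib[of _ n])
    finally show ?thesis by (simp add: algebra_simps)
  qed
  have "y \<bullet> y = a + b - 2 * (p1 \<bullet> p2)" unfolding y_def using diff_sq[OF p1c p2c] p11 p22 by simp
  also have "2 * (p1 \<bullet> p2) = (e - 1) * (a + b)" using p12a p12b by (simp add: algebra_simps)
  finally have "y \<bullet> y = (2 - e) * e" using ab by (simp add: algebra_simps)
  hence yy: "y \<bullet> y > 0" using p0 p2 unfolding e_def by simp
  have "\<exists>l<n. y \<bullet> v l \<noteq> 0"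
  proof (rule ccontr)
    assume "\<not> (\<exists>l<n. y \<bullet> v l \<noteq> 0)"
    hence "\<forall>l<n. y \<bullet> v l = 0" by simp
    hence "pr n n v y = lc n n v (\<lambda>_. 0)" unfolding pr_def by (intro lc_cong) auto
    also have "\<dots> = 0\<^sub>v n" by (intro eq_vecI) auto
    finally have "y = 0\<^sub>v n" using ortho_full_expand[OF ov yc] by simp
    thus False using yy by simp
  qed
  then obtain l where l: "l < n" "y \<bullet> v l \<noteq> 0" by auto
  have "(M *\<^sub>v y) \<bullet> v l = y \<bullet> (M *\<^sub>v v l)" using sym_dot[OF Mc Msym yc vc[OF l(1)]] by simp
  hence "(2 - e) * (y \<bullet> v l) = es ! l * (y \<bullet> v l)" using My evM l yc vc[OF l(1)] by simp
  hence "es ! l = 2 - e" using l(2) by simp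
  thus ?thesis using l unfolding e_def by blast
qed

lemma bound_A:
  assumes m0: "0 < m" and del: "\<delta> < es ! (k1 + k2 - m - 1)"
    and x: "x \<in> carrier_vec n" and xw: "\<forall>j<m. x \<bullet> w j = 0"
  shows "x \<bullet> (M *\<^sub>v x) \<le> (2 - \<delta>) * (x \<bullet> x)"
proof -
  define d where "d = k1 + k2 - m"
  have d1: "1 \<le> d" "d \<le> n" using m0 mk1 mk2 d_le_n unfolding d_def by auto
  have dlt: "d - 1 < n" using d1 by simp
  have del2: "\<delta> < 2" using del es_range[OF dlt] unfolding d_def by simp
  have "x \<bullet> (M *\<^sub>v x) = (\<Sum>k<n. es ! k * (x \<bullet> v k)^2)" by (rule quad_expand[OF ov Mc Msym evM x])
  also have "\<dots> \<le> (\<Sum>k<n. (2 - \<delta>) * (x \<bullet> v k)^2)"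
  proof (intro sum_mono)
    fix k assume "k \<in> {..<n}" hence k: "k < n" by simp
    show "es ! k * (x \<bullet> v k)^2 \<le> (2 - \<delta>) * (x \<bullet> v k)^2"
    proof (cases "x \<bullet> v k = 0")
      case True thus ?thesis by simp
    next
      case False
      have ne2: "es ! k \<noteq> 2"
      proof
        assume "es ! k = 2"
        hence "v k \<in> spn n m w" by (rule es_two[OF k])
        thus False using orth_W[OF x xw] False by blast
      qed
      have "es ! k \<le> 2 - \<delta>"
      proof (cases "es ! k = 0")
        case True thus ?thesis using del2 by simp
      next
        case False
        have r: "0 < es ! k" "es ! k < 2" using es_range[OF k] False ne2 by auto
        obtain l where l: "l < n" "es ! l = 2 - es ! k" using es_pair[OF k r] by blast
        have "l < d"
        proof (rule ccontr)
          assume "\<not> l < d" hence "es ! l = 0" using es_zero[OF l(1)] unfolding d_def by simp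
          thus False using l r by simp
        qed
        hence "es ! l \<ge> es ! (d - 1)"
        proof (cases "l = d - 1")
          case False
          hence "l < d - 1" using `l < d` by simp
          thus ?thesis using sorted_wrt_nth_less[OF srt, of l "d - 1"] dlt len by simp
        qed simp
        thus ?thesis using l del unfolding d_def by simp
      qed
      thus ?thesis by (intro mult_right_mono) auto
    qed
  qed
  also have "\<dots> = (2 - \<delta>) * (x \<bullet> x)"
    using parseval[OF ov] ortho_full_spn[OF ov] x by (simp add: sum_distrib_left)
  finally show ?thesis .
qed

end
end



lemma pm_dims[simp]: "dim_row (pm n k b) = n" "dim_col (pm n k b) = n"
  unfolding pm_def by auto

lemma quad_entries:
  fixes A :: "real mat"
  assumes A: "A \<in> carrier_mat n n" and x: "x \<in> carrier_vec n"
  shows "x \<bullet> (A *\<^sub>v x) = (\<Sum>i<n. \<Sum>l<n. A $$ (i,l) * (x $ i * x $ l))"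
proof -
  have "x \<bullet> (A *\<^sub>v x) = (\<Sum>i<n. x $ i * (A *\<^sub>v x) $ i)" using A x by (simp add: dot_sum[of _ n])
  also have "\<dots> = (\<Sum>i<n. x $ i * (\<Sum>l<n. A $$ (i,l) * x $ l))"
    by (intro sum.cong refl) (simp add: mv_index[OF A x])
  also have "\<dots> = (\<Sum>i<n. \<Sum>l<n. A $$ (i,l) * (x $ i * x $ l))"
    by (intro sum.cong refl) (simp add: sum_distrib_left mult_ac)
  finally show ?thesis .
qed

lemma sum_quad:
  fixes A :: "real mat"
  assumes A: "A \<in> carrier_mat n n" and xc: "\<And>c. c < k \<Longrightarrow> x c \<in> carrier_vec n"
  shows "(\<Sum>c<k. x c \<bullet> (A *\<^sub>v x c)) = (\<Sum>i<n. \<Sum>l<n. A $$ (i,l) * pm n k x $$ (i,l))"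
proof -
  have "(\<Sum>c<k. x c \<bullet> (A *\<^sub>v x c)) = (\<Sum>c<k. \<Sum>i<n. \<Sum>l<n. A $$ (i,l) * (x c $ i * x c $ l))"
    using quad_entries[OF A] xc by simp
  also have "\<dots> = (\<Sum>i<n. \<Sum>c<k. \<Sum>l<n. A $$ (i,l) * (x c $ i * x c $ l))" by (rule sum.swap)
  also have "\<dots> = (\<Sum>i<n. \<Sum>l<n. \<Sum>c<k. A $$ (i,l) * (x c $ i * x c $ l))"
    by (rule sum.cong[OF refl], rule sum.swap)
  also have "\<dots> = (\<Sum>i<n. \<Sum>l<n. A $$ (i,l) * pm n k x $$ (i,l))"
    by (intro sum.cong refl) (simp add: pm_index sum_distrib_left)
  finally show ?thesis .
qed

lemma pm_inner:
  assumes bc: "\<And>a. a < k \<Longrightarrow> b a \<in> carrier_vec n" and ec: "\<And>c. c < k' \<Longrightarrow> e c \<in> carrier_vec n"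
  shows "(\<Sum>i<n. \<Sum>l<n. pm n k b $$ (i,l) * pm n k' e $$ (i,l)) = (\<Sum>a<k. \<Sum>c<k'. (b a \<bullet> e c)^2)"
proof -
  have "(\<Sum>i<n. \<Sum>l<n. pm n k b $$ (i,l) * pm n k' e $$ (i,l)) =
        (\<Sum>i<n. \<Sum>l<n. \<Sum>a<k. \<Sum>c<k'. (b a $ i * e c $ i) * (b a $ l * e c $ l))"
    by (intro sum.cong refl) (simp add: pm_index sum_product mult_ac)
  also have "\<dots> = (\<Sum>i<n. \<Sum>a<k. \<Sum>l<n. \<Sum>c<k'. (b a $ i * e c $ i) * (b a $ l * e c $ l))"
    by (rule sum.cong[OF refl], rule sum.swap)
  also have "\<dots> = (\<Sum>a<k. \<Sum>i<n. \<Sum>l<n. \<Sum>c<k'. (b a $ i * e c $ i) * (b a $ l * e c $ l))"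
    by (rule sum.swap)
  also have "\<dots> = (\<Sum>a<k. \<Sum>i<n. \<Sum>c<k'. \<Sum>l<n. (b a $ i * e c $ i) * (b a $ l * e c $ l))"
    by (rule sum.cong[OF refl], rule sum.cong[OF refl], rule sum.swap)
  also have "\<dots> = (\<Sum>a<k. \<Sum>c<k'. \<Sum>i<n. \<Sum>l<n. (b a $ i * e c $ i) * (b a $ l * e c $ l))"
    by (rule sum.cong[OF refl], rule sum.swap)
  also have "\<dots> = (\<Sum>a<k. \<Sum>c<k'. (\<Sum>i<n. b a $ i * e c $ i) * (\<Sum>l<n. b a $ l * e c $ l))"
    by (intro sum.cong refl) (simp add: sum_product)
  also have "\<dots> = (\<Sum>a<k. \<Sum>c<k'. (b a \<bullet> e c)^2)"
    using bc ec by (intro sum.cong refl) (simp add: dot_sum[of _ n] power2_eq_square)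
  finally show ?thesis .
qed

lemma pm_frob:
  assumes o: "ortho n k b" and o': "ortho n k' e"
  shows "(\<Sum>i<n. \<Sum>l<n. (pm n k b $$ (i,l) - pm n k' e $$ (i,l))^2) = real k + real k' - 2 * (\<Sum>a<k. \<Sum>c<k'. (b a \<bullet> e c)^2)"
proof -
  have bc: "\<And>a. a < k \<Longrightarrow> b a \<in> carrier_vec n" using o by (simp add: ortho_def)
  have ec: "\<And>c. c < k' \<Longrightarrow> e c \<in> carrier_vec n" using o' by (simp add: ortho_def)
  have sq: "\<And>x y :: real. (x - y)^2 = x * x + y * y - 2 * (x * y)" by (simp add: power2_eq_square algebra_simps)
  have self: "(\<Sum>a<k. \<Sum>c<k. (b a \<bullet> b c)^2) = real k" if o: "ortho n k b" for k b
  proof -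
    have "(\<Sum>a<k. \<Sum>c<k. (b a \<bullet> b c)^2) = (\<Sum>a<k. \<Sum>c<k. if a = c then 1 else 0)"
      using o by (intro sum.cong refl) (simp add: ortho_def)
    thus ?thesis by simp
  qed
  have "(\<Sum>i<n. \<Sum>l<n. (pm n k b $$ (i,l) - pm n k' e $$ (i,l))^2) =
    (\<Sum>i<n. \<Sum>l<n. pm n k b $$ (i,l) * pm n k b $$ (i,l)) + (\<Sum>i<n. \<Sum>l<n. pm n k' e $$ (i,l) * pm n k' e $$ (i,l))
     - 2 * (\<Sum>i<n. \<Sum>l<n. pm n k b $$ (i,l) * pm n k' e $$ (i,l))"
    unfolding sq by (simp add: sum.distrib sum_subtractf sum_distrib_left)
  also have "\<dots> = real k + real k' - 2 * (\<Sum>a<k. \<Sum>c<k'. (b a \<bullet> e c)^2)"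
    using pm_inner[OF bc bc] pm_inner[OF ec ec] pm_inner[OF bc ec] self[OF o] self[OF o'] by simp
  finally show ?thesis by simp
qed

lemma frob_pm: "frob_norm (pm n k b - pm n k' e) = sqrt (\<Sum>i<n. \<Sum>l<n. (pm n k b $$ (i,l) - pm n k' e $$ (i,l))^2)"
proof -
  have "(\<Sum>i<dim_row (pm n k b - pm n k' e). \<Sum>j<dim_col (pm n k b - pm n k' e). ((pm n k b - pm n k' e) $$ (i, j))^2)
     = (\<Sum>i<n. \<Sum>l<n. (pm n k b $$ (i,l) - pm n k' e $$ (i,l))^2)"
  proof -
    have d: "dim_row (pm n k b - pm n k' e) = n" "dim_col (pm n k b - pm n k' e) = n" by simp_all
    show ?thesis unfolding d by (intro sum.cong refl) simp
  qed
  thus ?thesis unfolding frob_norm_def by simp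
qed

lemma amgm: "0 < t \<Longrightarrow> (f :: real) * g \<le> (t * f^2 + g^2 / t) / 2"
proof -
  assume t: "0 < t"
  have "(t * f^2 + g^2 / t) / 2 - f * g = (t * f - g)^2 / (2 * t)" using t
    by (simp add: field_simps power2_eq_square)
  moreover have "(t * f - g)^2 / (2 * t) \<ge> 0" using t by simp
  ultimately show ?thesis by linarith
qed

lemma sum_amgm:
  fixes F G :: "nat \<Rightarrow> nat \<Rightarrow> real"
  assumes t: "0 < t"
  shows "(\<Sum>i<n. \<Sum>l<n. F i l * G i l) \<le> (t * (\<Sum>i<n. \<Sum>l<n. (F i l)^2) + (\<Sum>i<n. \<Sum>l<n. (G i l)^2) / t) / 2"
proof -
  have "(\<Sum>i<n. \<Sum>l<n. F i l * G i l) \<le> (\<Sum>i<n. \<Sum>l<n. (t * (F i l)^2 + (G i l)^2 / t) / 2)"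
    by (intro sum_mono amgm[OF t])
  also have "\<dots> = (t * (\<Sum>i<n. \<Sum>l<n. (F i l)^2) + (\<Sum>i<n. \<Sum>l<n. (G i l)^2) / t) / 2"
    by (simp add: sum.distrib sum_distrib_left sum_divide_distrib add_divide_distrib)
  finally show ?thesis .
qed



lemma pmsum_sym: "i < n \<Longrightarrow> l < n \<Longrightarrow> (pm n k1 b1 + pm n k2 b2) $$ (i,l) = (pm n k1 b1 + pm n k2 b2) $$ (l,i)"
  using pm_sym[of i n l k1 b1] pm_sym[of i n l k2 b2] by (simp add: pm_def)

lemma core:
  fixes \<delta> \<gamma> :: real
  assumes tp: "twoproj n k1 k2 m b1 b2 w"
    and ob1t: "ortho n k1t b1t" and ob2t: "ortho n k2t b2t" and ou: "ortho n m u"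
    and eu: "\<forall>i<m. (pm n k1t b1t + pm n k2t b2t) *\<^sub>v u i = eigs_desc (pm n k1t b1t + pm n k2t b2t) ! i \<cdot>\<^sub>v u i"
    and dpos: "0 < \<delta>" and del: "\<delta> < eigs_desc (pm n k1 b1 + pm n k2 b2) ! (k1 + k2 - m - 1)"
    and g1: "frob_norm (pm n k1 b1 - pm n k1t b1t) \<le> \<gamma>" and g2: "frob_norm (pm n k2 b2 - pm n k2t b2t) \<le> \<gamma>"
  shows "frob_norm (pm n m w - pm n m u) \<le> 4 * \<gamma> / \<delta>"
proof -
  interpret twoproj n k1 k2 m b1 b2 w by (rule tp)
  define Mt where "Mt = pm n k1t b1t + pm n k2t b2t"
  have Mtc: "Mt \<in> carrier_mat n n" unfolding Mt_def by simp
  have Mtsym: "\<And>i l. i < n \<Longrightarrow> l < n \<Longrightarrow> Mt $$ (i,l) = Mt $$ (l,i)" unfolding Mt_def by (rule pmsum_sym)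
  obtain v where ov: "ortho n n v" and evM: "\<forall>k<n. M *\<^sub>v v k = eigs_desc M ! k \<cdot>\<^sub>v v k"
    and len: "length (eigs_desc M) = n" and srt: "sorted_wrt (\<ge>) (eigs_desc M)"
    using spectral[OF Mc Msym] by blast
  obtain vt where ovt: "ortho n n vt" and evMt: "\<forall>k<n. Mt *\<^sub>v vt k = eigs_desc Mt ! k \<cdot>\<^sub>v vt k"
    and lent: "length (eigs_desc Mt) = n" and srtt: "sorted_wrt (\<ge>) (eigs_desc Mt)"
    using spectral[OF Mtc Mtsym] by blast
  have wc: "\<And>a. a < m \<Longrightarrow> w a \<in> carrier_vec n" using ow by (simp add: ortho_def)
  have uc: "\<And>c. c < m \<Longrightarrow> u c \<in> carrier_vec n" using ou by (simp add: ortho_def)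
  define Q where "Q = pm n m w"
  define Qt where "Qt = pm n m u"
  define S where "S = (\<Sum>a<m. \<Sum>c<m. (w a \<bullet> u c)^2)"
  define X where "X = (\<Sum>i<n. \<Sum>l<n. (Q $$ (i,l) - Qt $$ (i,l))^2)"
  have X: "X = 2 * m - 2 * S" unfolding X_def Q_def Qt_def S_def using pm_frob[OF ow ou] by simp
  have fr: "frob_norm (pm n m w - pm n m u) = sqrt X" unfolding X_def Q_def Qt_def by (rule frob_pm)
  have stepB1: "u c \<bullet> (M *\<^sub>v u c) \<le> 2 - \<delta> * (1 - (\<Sum>a<m. (u c \<bullet> w a)^2))" if c: "c < m" for c
  proof -
    have m0: "0 < m" using c by simp
    define x where "x = u c"
    have xc: "x \<in> carrier_vec n" unfolding x_def using uc[OF c] .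
    define q where "q = pr n m w x"
    define r where "r = x - q"
    have qc: "q \<in> carrier_vec n" unfolding q_def by simp
    have rc: "r \<in> carrier_vec n" unfolding r_def using xc qc by simp
    have xqr: "x = q + r" unfolding r_def using xc qc by (intro eq_vecI) auto
    have rw: "\<forall>j<m. r \<bullet> w j = 0" unfolding r_def q_def using resid_orth[OF ow xc] by simp
    have rq: "r \<bullet> q = 0" unfolding r_def q_def using resid_orth_spn[OF ow xc pr_in_spn] .
    have qr: "q \<bullet> r = 0" using rq qc rc by (simp add: comm_scalar_prod[of _ n])
    have Mq: "M *\<^sub>v q = 2 \<cdot>\<^sub>v q" unfolding q_def by (rule MW[OF pr_in_spn])
    have Mx: "M *\<^sub>v x = 2 \<cdot>\<^sub>v q + M *\<^sub>v r"
      using xqr Mq add_mult_distrib_mat_vec[OF Mc Mc] qc rc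
      by (metis Mc add_mult_distrib_mat_vec[of M n n] mult_add_distrib_mat_vec[of M n n q r])
    have MRc: "M *\<^sub>v r \<in> carrier_vec n" by (rule mult_mat_vec_carrier[OF Mc rc])
    have "x \<bullet> (M *\<^sub>v x) = 2 * (x \<bullet> q) + x \<bullet> (M *\<^sub>v r)"
      unfolding Mx using xc qc MRc by (simp add: scalar_prod_add_distrib[of _ n])
    also have "x \<bullet> (M *\<^sub>v r) = (M *\<^sub>v x) \<bullet> r" by (rule sym_dot[OF Mc Msym xc rc])
    also have "\<dots> = 2 * (q \<bullet> r) + (M *\<^sub>v r) \<bullet> r"
      unfolding Mx using qc MRc rc by (simp add: add_scalar_prod_distrib[of _ n])
    also have "(M *\<^sub>v r) \<bullet> r = r \<bullet> (M *\<^sub>v r)" using MRc rc by (simp add: comm_scalar_prod[of _ n])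
    finally have e1: "x \<bullet> (M *\<^sub>v x) = 2 * (x \<bullet> q) + r \<bullet> (M *\<^sub>v r)" using qr by simp
    have T: "x \<bullet> q = (\<Sum>a<m. (x \<bullet> w a)^2)" unfolding q_def by (rule pr_self[OF ow xc])
    have rr: "r \<bullet> r = 1 - (\<Sum>a<m. (x \<bullet> w a)^2)"
      using pythag[OF ow xc] ou c unfolding r_def q_def x_def by (simp add: ortho_def)
    have bA: "r \<bullet> (M *\<^sub>v r) \<le> (2 - \<delta>) * (r \<bullet> r)"
      by (rule bound_A[OF ov evM srt len m0 del rc rw])
    have bA': "r \<bullet> (M *\<^sub>v r) \<le> 2 * (r \<bullet> r) - \<delta> * (r \<bullet> r)" using bA by (simp add: algebra_simps)
    have rr': "\<delta> * (r \<bullet> r) = \<delta> - \<delta> * (\<Sum>a<m. (x \<bullet> w a)^2)" using rr by (simp add: right_diff_distrib)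
    have "x \<bullet> (M *\<^sub>v x) \<le> 2 - \<delta> + \<delta> * (\<Sum>a<m. (x \<bullet> w a)^2)" using e1 T rr bA' rr' by linarith
    thus ?thesis unfolding x_def by (simp add: algebra_simps)
  qed
  have stepB: "(\<Sum>c<m. u c \<bullet> (M *\<^sub>v u c)) \<le> 2 * m - \<delta> * (m - S)"
  proof -
    have "(\<Sum>c<m. u c \<bullet> (M *\<^sub>v u c)) \<le> (\<Sum>c<m. 2 - \<delta> * (1 - (\<Sum>a<m. (u c \<bullet> w a)^2)))"
      by (intro sum_mono stepB1) auto
    also have "\<dots> = 2 * m - \<delta> * (m - (\<Sum>c<m. \<Sum>a<m. (u c \<bullet> w a)^2))"
      by (simp add: sum_subtractf sum_distrib_left algebra_simps)
    also have "(\<Sum>c<m. \<Sum>a<m. (u c \<bullet> w a)^2) = S"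
      unfolding S_def by (subst sum.swap) (intro sum.cong refl, use uc wc in \<open>simp add: comm_scalar_prod[of _ n]\<close>)
    finally show ?thesis .
  qed
  have stepC: "(\<Sum>a<m. w a \<bullet> (M *\<^sub>v w a)) = 2 * m"
  proof -
    have "(\<Sum>a<m. w a \<bullet> (M *\<^sub>v w a)) = (\<Sum>a<m. 2)"
    proof (intro sum.cong refl)
      fix a assume "a \<in> {..<m}" hence a: "a < m" by simp
      have "M *\<^sub>v w a = 2 \<cdot>\<^sub>v w a" by (rule MW[OF ortho_in_spn[OF ow a]])
      thus "w a \<bullet> (M *\<^sub>v w a) = 2" using ow a wc[OF a] by (simp add: ortho_def)
    qed
    thus ?thesis by simp
  qed
  have stepD: "(\<Sum>a<m. w a \<bullet> (Mt *\<^sub>v w a)) \<le> (\<Sum>c<m. u c \<bullet> (Mt *\<^sub>v u c))"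
  proof -
    have "(\<Sum>a<m. w a \<bullet> (Mt *\<^sub>v w a)) \<le> (\<Sum>c<m. eigs_desc Mt ! c)"
      by (rule kyfan[OF Mtc Mtsym ovt evMt srtt lent ow])
    also have "\<dots> = (\<Sum>c<m. u c \<bullet> (Mt *\<^sub>v u c))"
    proof (intro sum.cong refl)
      fix c assume "c \<in> {..<m}" hence c: "c < m" by simp
      thus "eigs_desc Mt ! c = u c \<bullet> (Mt *\<^sub>v u c)"
        using eu uc[OF c] ou unfolding Mt_def by (simp add: ortho_def)
    qed
    finally show ?thesis .
  qed
  define F1 where "F1 = (\<lambda>i l. pm n k1 b1 $$ (i,l) - pm n k1t b1t $$ (i,l))"
  define F2 where "F2 = (\<lambda>i l. pm n k2 b2 $$ (i,l) - pm n k2t b2t $$ (i,l))"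
  define D where "D = (\<lambda>i l. Q $$ (i,l) - Qt $$ (i,l))"
  have key: "\<delta> * (m - S) \<le> (\<Sum>i<n. \<Sum>l<n. F1 i l * D i l) + (\<Sum>i<n. \<Sum>l<n. F2 i l * D i l)"
  proof -
    have qM: "(\<Sum>a<m. w a \<bullet> (M *\<^sub>v w a)) = (\<Sum>i<n. \<Sum>l<n. M $$ (i,l) * Q $$ (i,l))"
      unfolding Q_def by (rule sum_quad[OF Mc wc])
    have qtM: "(\<Sum>c<m. u c \<bullet> (M *\<^sub>v u c)) = (\<Sum>i<n. \<Sum>l<n. M $$ (i,l) * Qt $$ (i,l))"
      unfolding Qt_def by (rule sum_quad[OF Mc uc])
    have qMt: "(\<Sum>a<m. w a \<bullet> (Mt *\<^sub>v w a)) = (\<Sum>i<n. \<Sum>l<n. Mt $$ (i,l) * Q $$ (i,l))"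
      unfolding Q_def by (rule sum_quad[OF Mtc wc])
    have qtMt: "(\<Sum>c<m. u c \<bullet> (Mt *\<^sub>v u c)) = (\<Sum>i<n. \<Sum>l<n. Mt $$ (i,l) * Qt $$ (i,l))"
      unfolding Qt_def by (rule sum_quad[OF Mtc uc])
    have "\<delta> * (m - S) \<le> ((\<Sum>i<n. \<Sum>l<n. M $$ (i,l) * Q $$ (i,l)) - (\<Sum>i<n. \<Sum>l<n. M $$ (i,l) * Qt $$ (i,l)))
        + ((\<Sum>i<n. \<Sum>l<n. Mt $$ (i,l) * Qt $$ (i,l)) - (\<Sum>i<n. \<Sum>l<n. Mt $$ (i,l) * Q $$ (i,l)))"
      using stepB stepC stepD qM qtM qMt qtMt by linarith
    also have "\<dots> = (\<Sum>i<n. \<Sum>l<n. (M $$ (i,l) * Q $$ (i,l) - M $$ (i,l) * Qt $$ (i,l)) + (Mt $$ (i,l) * Qt $$ (i,l) - Mt $$ (i,l) * Q $$ (i,l)))"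
      by (simp add: sum.distrib sum_subtractf)
    also have "\<dots> = (\<Sum>i<n. \<Sum>l<n. F1 i l * D i l + F2 i l * D i l)"
      unfolding F1_def F2_def D_def Mt_def
      by (intro sum.cong refl) (simp add: algebra_simps)
    also have "\<dots> = (\<Sum>i<n. \<Sum>l<n. F1 i l * D i l) + (\<Sum>i<n. \<Sum>l<n. F2 i l * D i l)"
      by (simp add: sum.distrib)
    finally show ?thesis .
  qed
  have gam: "\<gamma> \<ge> 0" using g1 unfolding frob_norm_def by (meson order_trans real_sqrt_ge_zero sum_nonneg zero_le_power2)
  have F1s: "(\<Sum>i<n. \<Sum>l<n. (F1 i l)^2) \<le> \<gamma>^2"
    using g1 unfolding frob_pm F1_def by (intro sqrt_le_D) simp
  have F2s: "(\<Sum>i<n. \<Sum>l<n. (F2 i l)^2) \<le> \<gamma>^2"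
    using g2 unfolding frob_pm F2_def by (intro sqrt_le_D) simp
  have XD: "X = (\<Sum>i<n. \<Sum>l<n. (D i l)^2)" unfolding X_def D_def ..
  define t where "t = 4 / \<delta>"
  have t: "0 < t" unfolding t_def using dpos by simp
  have a1: "(\<Sum>i<n. \<Sum>l<n. F1 i l * D i l) \<le> (t * \<gamma>^2 + X / t) / 2"
    using sum_amgm[OF t, where F=F1 and G=D and n=n] F1s t unfolding XD
    by (smt (verit) divide_right_mono mult_left_mono)
  have a2: "(\<Sum>i<n. \<Sum>l<n. F2 i l * D i l) \<le> (t * \<gamma>^2 + X / t) / 2"
    using sum_amgm[OF t, where F=F2 and G=D and n=n] F2s t unfolding XD
    by (smt (verit) divide_right_mono mult_left_mono)
  have e: "\<delta> * (X / 2) = \<delta> * (real m - S)" using X by simp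
  have "\<delta> * (X / 2) \<le> t * \<gamma>^2 + X / t"
  proof -
    have "\<delta> * (X / 2) \<le> (\<Sum>i<n. \<Sum>l<n. F1 i l * D i l) + (\<Sum>i<n. \<Sum>l<n. F2 i l * D i l)"
      unfolding e by (rule key)
    also have "\<dots> \<le> (t * \<gamma>^2 + X / t) / 2 + (t * \<gamma>^2 + X / t) / 2" using a1 a2 by (rule add_mono)
    also have "\<dots> = t * \<gamma>^2 + X / t" by simp
    finally show ?thesis .
  qed
  hence "\<delta> * (X / 2) \<le> 4 / \<delta> * \<gamma>^2 + X * \<delta> / 4" unfolding t_def using dpos by simp
  moreover have "\<delta> * (X / 2) = 2 * (\<delta> * X / 4)" "X * \<delta> / 4 = \<delta> * X / 4" by simp_all
  ultimately have "\<delta> * X / 4 \<le> 4 / \<delta> * \<gamma>^2" by linarith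
  hence "\<delta> * X / 4 * (4 / \<delta>) \<le> 4 / \<delta> * \<gamma>^2 * (4 / \<delta>)" using dpos by (intro mult_right_mono) auto
  hence Xb: "X \<le> (4 * \<gamma> / \<delta>)^2" using dpos by (simp add: power2_eq_square field_simps)
  have "sqrt X \<le> sqrt ((4 * \<gamma> / \<delta>)^2)" using Xb by (rule real_sqrt_le_mono)
  also have "\<dots> = 4 * \<gamma> / \<delta>" using gam dpos by simp
  finally show ?thesis using fr by simp
qed



theorem mainTheorem9:
  shows "\<exists>C::real. \<forall>(n::nat) (k1::nat) (k2::nat) (m::nat) V1 V2 W V1' V2' (\<delta>::real) (\<gamma>::real)
           (u :: nat \<Rightarrow> real vec).
     rsubspace n V1 \<and> rsubspace n V2 \<and> rdim n V1 = k1 \<and> rdim n V2 = k2 \<and>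
     W = V1 \<inter> V2 \<and> rdim n W = m \<and>
     \<delta> > 0 \<and> eig (k1 + k2 - m) (proj n V1 + proj n V2) > \<delta> \<and>
     rsubspace n V1' \<and> rsubspace n V2' \<and> rdim n V1' = k1 \<and> rdim n V2' = k2 \<and>
     frob_norm (proj n V1 - proj n V1') \<le> \<gamma> \<and> frob_norm (proj n V2 - proj n V2') \<le> \<gamma> \<and>
     (\<forall>i<m. u i \<in> carrier_vec n \<and>
        (proj n V1' + proj n V2') *\<^sub>v u i = eig (i + 1) (proj n V1' + proj n V2') \<cdot>\<^sub>v u i) \<and>
     (\<forall>i<m. \<forall>j<m. u i \<bullet> u j = (if i = j then 1 else 0))
     \<longrightarrow> frob_norm (proj n W - proj n (rspan n (u ` {..<m}))) \<le> C * \<gamma> / \<delta>"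
proof (intro exI[of _ 4] allI impI)
  fix n k1 k2 m :: nat and V1 V2 W V1' V2' :: "real vec set" and \<delta> \<gamma> :: real and u :: "nat \<Rightarrow> real vec"
  assume H: "rsubspace n V1 \<and> rsubspace n V2 \<and> rdim n V1 = k1 \<and> rdim n V2 = k2 \<and>
     W = V1 \<inter> V2 \<and> rdim n W = m \<and>
     \<delta> > 0 \<and> eig (k1 + k2 - m) (proj n V1 + proj n V2) > \<delta> \<and>
     rsubspace n V1' \<and> rsubspace n V2' \<and> rdim n V1' = k1 \<and> rdim n V2' = k2 \<and>
     frob_norm (proj n V1 - proj n V1') \<le> \<gamma> \<and> frob_norm (proj n V2 - proj n V2') \<le> \<gamma> \<and>
     (\<forall>i<m. u i \<in> carrier_vec n \<and>
        (proj n V1' + proj n V2') *\<^sub>v u i = eig (i + 1) (proj n V1' + proj n V2') \<cdot>\<^sub>v u i) \<and>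
     (\<forall>i<m. \<forall>j<m. u i \<bullet> u j = (if i = j then 1 else 0))"
  have V1: "rsubspace n V1" and V2: "rsubspace n V2" and d1: "rdim n V1 = k1" and d2: "rdim n V2 = k2"
    and Wd: "W = V1 \<inter> V2" and dW: "rdim n W = m" and dpos: "\<delta> > 0"
    and del: "eig (k1 + k2 - m) (proj n V1 + proj n V2) > \<delta>"
    and V1': "rsubspace n V1'" and V2': "rsubspace n V2'"
    and g1: "frob_norm (proj n V1 - proj n V1') \<le> \<gamma>" and g2: "frob_norm (proj n V2 - proj n V2') \<le> \<gamma>"
    and ue: "\<forall>i<m. u i \<in> carrier_vec n \<and>
        (proj n V1' + proj n V2') *\<^sub>v u i = eig (i + 1) (proj n V1' + proj n V2') \<cdot>\<^sub>v u i"
    and uo: "\<forall>i<m. \<forall>j<m. u i \<bullet> u j = (if i = j then 1 else 0)"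
    using H by auto
  have Wsub: "rsubspace n W" unfolding Wd
    by (rule closedV_rsubspace[OF closedV_Int[OF rsubspace_closedV[OF V1] rsubspace_closedV[OF V2]]])
  obtain w where ow: "ortho n m w" and sw: "spn n m w = W" and wW: "\<forall>j<m. w j \<in> W"
    using sub_basis[OF Wsub] dW by auto
  obtain b1 where ob1: "ortho n k1 b1" and wb1: "\<forall>j<m. b1 j = w j" and sb1: "spn n k1 b1 = V1"
    and mk1: "m \<le> k1"
    using sub_basis_ext[OF V1 ow] wW Wd d1 by auto
  obtain b2 where ob2: "ortho n k2 b2" and wb2: "\<forall>j<m. b2 j = w j" and sb2: "spn n k2 b2 = V2"
    and mk2: "m \<le> k2"
    using sub_basis_ext[OF V2 ow] wW Wd d2 by auto
  obtain b1t where ob1t: "ortho n (rdim n V1') b1t" and sb1t: "spn n (rdim n V1') b1t = V1'"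
    using sub_basis[OF V1'] by auto
  obtain b2t where ob2t: "ortho n (rdim n V2') b2t" and sb2t: "spn n (rdim n V2') b2t = V2'"
    using sub_basis[OF V2'] by auto
  have tp: "twoproj n k1 k2 m b1 b2 w"
    by (unfold_locales) (use ob1 ob2 ow wb1 wb2 sb1 sb2 sw Wd mk1 mk2 in auto)
  have p1: "proj n V1 = pm n k1 b1" using proj_spn[OF ob1] sb1 by simp
  have p2: "proj n V2 = pm n k2 b2" using proj_spn[OF ob2] sb2 by simp
  have p1t: "proj n V1' = pm n (rdim n V1') b1t" using proj_spn[OF ob1t] sb1t by simp
  have p2t: "proj n V2' = pm n (rdim n V2') b2t" using proj_spn[OF ob2t] sb2t by simp
  have pW: "proj n W = pm n m w" using proj_spn[OF ow] sw by simp
  have ou: "ortho n m u" using ue uo unfolding ortho_def by auto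
  have pU: "proj n (rspan n (u ` {..<m})) = pm n m u" using proj_spn[OF ou] rspan_spn[OF ou] by simp
  have eu: "\<forall>i<m. (pm n (rdim n V1') b1t + pm n (rdim n V2') b2t) *\<^sub>v u i =
      eigs_desc (pm n (rdim n V1') b1t + pm n (rdim n V2') b2t) ! i \<cdot>\<^sub>v u i"
    using ue unfolding p1t p2t eig_def by simp
  have del': "\<delta> < eigs_desc (pm n k1 b1 + pm n k2 b2) ! (k1 + k2 - m - 1)"
    using del unfolding p1 p2 eig_def by simp
  have "frob_norm (pm n m w - pm n m u) \<le> 4 * \<gamma> / \<delta>"
    by (rule core[OF tp ob1t ob2t ou eu dpos del']) (use g1 g2 p1 p2 p1t p2t in simp_all)
  thus "frob_norm (proj n W - proj n (rspan n (u ` {..<m}))) \<le> 4 * \<gamma> / \<delta>" using pW pU by simp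
qed


end
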